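(* Let $\Gamma_M$ ($M>0$) be a family of nonatomic routing games with a single OD pair, sharing the same graph, path set $\mathcal P$ and edge cost functions $(c_e)_{e\in\mathcal E}$, where $M$ is the traffic demand of the OD pair. Suppose there is a function $c:(0,\infty)\to(0,\infty)$, regularly varying at $\infty$, which is a benchmark for $(c_e)_{e\in\mathcal E}$ at $\infty$, and that the network is tight relative to $c$ at $\infty$, i.e. $0<\alpha<\infty$ where $\alpha=\min_{p\in\mathcal P}\max_{e\in p}\alpha_e$ and $\alpha_e=\lim_{x\to \infty}c_e(x)/c(x)$. Then $\lim_{M\to \infty}\mathrm{PoA}(\Gamma_M)=1$.
   Context: A nonatomic routing game consists of: a finite directed multigraph with edge set $\mathcal E$; a finite set $\mathcal I$ of origin–destination (OD) pairs, each $i\in\mathcal I$ with a demand $m^i\ge 0$ and a nonempty finite set $\mathcal P^i$ of paths from its origin to its destination, the sets $\mathcal P^i$ pairwise disjoint, $\mathcal P=\bigcup_i\mathcal P^i$; and for each edge $e$ a continuous nondecreasing cost function $c_e:[0,\infty)\to[0,\infty)$. The total inflow is $M=\sum_i m^i>0$. A feasible flow is $f\in\mathbb R_+^{\mathcal P}$ with $\sum_{p\in\mathcal P^i}f_p=m^i$ for all $i$; it induces loads $x_e=\sum_{p\ni e}f_p$ and path costs $c_p(f)=\sum_{e\in p}c_e(x_e)$. A Wardrop equilibrium is a feasible flow $f^*$ with $c_p(f^* )\le c_{p'}(f^* )$ for all $i$ and all $p,p'\in\mathcal P^i$ with $f^*_p>0$. The social cost is $L(x)=\sum_e x_e c_e(x_e)$;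 $\mathrm{Opt}(\Gamma)$ is its minimum over loads induced by feasible flows, $\mathrm{Eq}(\Gamma)=L(x^* )$ for the load of a Wardrop equilibrium (all equilibria have the same social cost), and $\mathrm{PoA}(\Gamma)=\mathrm{Eq}(\Gamma)/\mathrm{Opt}(\Gamma)$; it is assumed throughout that $\mathrm{Opt}(\Gamma)>0$ (if $\mathrm{Opt}=0$ one sets $\mathrm{PoA}=1$). For $\omega\in\{0,\infty\}$, $g:(0,\infty)\to(0,\infty)$ is regularly varying at $\omega$ if $\lim_{t\to\omega}g(tx)/g(t)$ exists and is finite and nonzero for every $x>0$. A function $c$ regularly varying at $\omega$ is a benchmark for the costs $(c_e)$ at $\omega$ if the limit $\alpha_e=\lim_{x\to\omega}c_e(x)/c(x)\in[0,\infty]$ exists for every edge $e$. *)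

theory Defs
  imports "HOL-Analysis.Analysis"
begin

text \<open>Directed multigraph: edges of type 'e (finite edge set E), each edge e goes from
  vertex src e to vertex trg e.  A path is a list of edges.\<close>

fun is_walk :: "('e \<Rightarrow> 'v) \<Rightarrow> ('e \<Rightarrow> 'v) \<Rightarrow> 'v \<Rightarrow> 'e list \<Rightarrow> 'v \<Rightarrow> bool" where
  "is_walk src trg u [] v = (u = v)"
| "is_walk src trg u (e # es) v = (src e = u \<and> is_walk src trg (trg e) es v)"

definition simple_path :: "'e set \<Rightarrow> ('e \<Rightarrow> 'v) \<Rightarrow> ('e \<Rightarrow> 'v) \<Rightarrow> 'v \<Rightarrow> 'v \<Rightarrow> 'e list \<Rightarrow> bool" where
  "simple_path E src trg u v p \<longleftrightarrow>
     set p \<subseteq> E \<and> is_walk src trg u p v \<and> distinct (u # map trg p)"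

text \<open>Single OD pair with path set P and demand M.\<close>
definition feasible :: "'e list set \<Rightarrow> real \<Rightarrow> ('e list \<Rightarrow> real) \<Rightarrow> bool" where
  "feasible P M f \<longleftrightarrow> (\<forall>p\<in>P. 0 \<le> f p) \<and> (\<Sum>p\<in>P. f p) = M"

definition load :: "'e list set \<Rightarrow> ('e list \<Rightarrow> real) \<Rightarrow> 'e \<Rightarrow> real" where
  "load P f e = (\<Sum>p\<in>{p\<in>P. e \<in> set p}. f p)"

definition path_cost :: "'e list set \<Rightarrow> ('e \<Rightarrow> real \<Rightarrow> real) \<Rightarrow> ('e list \<Rightarrow> real) \<Rightarrow> 'e list \<Rightarrow> real" where
  "path_cost P ce f p = (\<Sum>e\<in>set p. ce e (load P f e))"

definition wardrop :: "'e list set \<Rightarrow> ('e \<Rightarrow> real \<Rightarrow> real) \<Rightarrow> real \<Rightarrow> ('e list \<Rightarrow> real) \<Rightarrow> bool" where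
  "wardrop P ce M f \<longleftrightarrow> feasible P M f \<and>
     (\<forall>p\<in>P. \<forall>p'\<in>P. 0 < f p \<longrightarrow> path_cost P ce f p \<le> path_cost P ce f p')"

definition social_cost :: "'e set \<Rightarrow> 'e list set \<Rightarrow> ('e \<Rightarrow> real \<Rightarrow> real) \<Rightarrow> ('e list \<Rightarrow> real) \<Rightarrow> real" where
  "social_cost E P ce f = (\<Sum>e\<in>E. load P f e * ce e (load P f e))"

definition Opt :: "'e set \<Rightarrow> 'e list set \<Rightarrow> ('e \<Rightarrow> real \<Rightarrow> real) \<Rightarrow> real \<Rightarrow> real" where
  "Opt E P ce M = Inf (social_cost E P ce ` {f. feasible P M f})"

text \<open>All Wardrop equilibria have the same social cost; pick one.\<close>
definition Eq :: "'e set \<Rightarrow> 'e list set \<Rightarrow> ('e \<Rightarrow> real \<Rightarrow> real) \<Rightarrow> real \<Rightarrow> real" where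
  "Eq E P ce M = social_cost E P ce (SOME f. wardrop P ce M f)"

definition PoA :: "'e set \<Rightarrow> 'e list set \<Rightarrow> ('e \<Rightarrow> real \<Rightarrow> real) \<Rightarrow> real \<Rightarrow> real" where
  "PoA E P ce M = (if Opt E P ce M = 0 then 1 else Eq E P ce M / Opt E P ce M)"

definition regularly_varying_at_top :: "(real \<Rightarrow> real) \<Rightarrow> bool" where
  "regularly_varying_at_top g \<longleftrightarrow>
     (\<forall>x>0. \<exists>L. L \<noteq> 0 \<and> ((\<lambda>t. g (t * x) / g t) \<longlongrightarrow> L) at_top)"

end

theory Submission
  imports Defs
begin


lemma load_nonneg: "feasible P M f \<Longrightarrow> 0 \<le> load P f e"
  unfolding load_def feasible_def by (auto intro: sum_nonneg)

lemma load_le: assumes "finite P" "feasible P M f" shows "load P f e \<le> M"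
proof -
  have "load P f e \<le> sum f P" unfolding load_def
    by (rule sum_mono2) (use assms in \<open>auto simp: feasible_def\<close>)
  then show ?thesis using assms by (simp add: feasible_def)
qed

lemma load_ge: "finite P \<Longrightarrow> feasible P M f \<Longrightarrow> p \<in> P \<Longrightarrow> e \<in> set p \<Longrightarrow> f p \<le> load P f e"
  unfolding load_def feasible_def
  by (intro member_le_sum) auto

lemma sum_load_swap:
  assumes "finite E" "finite P" "\<forall>p\<in>P. set p \<subseteq> E"
  shows "(\<Sum>e\<in>E. load P g e * w e) = (\<Sum>p\<in>P. g p * (\<Sum>e\<in>set p. w e))"
proof -
  have "(\<Sum>e\<in>E. load P g e * w e) = (\<Sum>e\<in>E. \<Sum>p\<in>{p\<in>P. e \<in> set p}. g p * w e)"
    unfolding load_def by (simp add: sum_distrib_right)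
  also have "\<dots> = (\<Sum>p\<in>P. \<Sum>e | e\<in>E \<and> e \<in> set p. g p * w e)"
    by (rule sum.swap_restrict[OF assms(1,2)])
  also have "\<dots> = (\<Sum>p\<in>P. g p * (\<Sum>e\<in>set p. w e))"
  proof (rule sum.cong[OF refl])
    fix p assume "p \<in> P"
    then have "{e. e\<in>E \<and> e \<in> set p} = set p" using assms(3) by auto
    then show "(\<Sum>e | e\<in>E \<and> e \<in> set p. g p * w e) = g p * (\<Sum>e\<in>set p. w e)"
      by (simp add: sum_distrib_left)
  qed
  finally show ?thesis .
qed

lemma wardrop_VI:
  assumes fin: "finite E" "finite P" "P \<noteq> {}" and sub: "\<forall>p\<in>P. set p \<subseteq> E"
    and W: "wardrop P ce M f" and G: "feasible P M g"
  shows "social_cost E P ce f \<le> (\<Sum>e\<in>E. ce e (load P f e) * load P g e)"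
proof -
  define pc where "pc = path_cost P ce f"
  have F: "feasible P M f" using W unfolding wardrop_def by auto
  define m where "m = Min (pc ` P)"
  have mle: "m \<le> pc p" if "p \<in> P" for p using that fin unfolding m_def by auto
  have eq: "f p * pc p = f p * m" if "p \<in> P" for p
  proof (cases "f p > 0")
    case True
    then have "pc p \<le> pc p'" if "p' \<in> P" for p' using W that \<open>p\<in>P\<close> unfolding wardrop_def pc_def by auto
    then have "pc p \<le> m" unfolding m_def using fin by (auto intro!: Min.boundedI)
    with mle[OF that] show ?thesis by simp
  next
    case False
    then have "f p = 0" using F that unfolding feasible_def by force
    then show ?thesis by simp
  qed
  have "social_cost E P ce f = (\<Sum>e\<in>E. load P f e * ce e (load P f e))"
    unfolding social_cost_def ..
  also have "\<dots> = (\<Sum>p\<in>P. f p * pc p)"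
    unfolding pc_def path_cost_def by (rule sum_load_swap[OF fin(1,2) sub])
  also have "\<dots> = (\<Sum>p\<in>P. f p * m)" by (rule sum.cong) (auto simp: eq)
  also have "\<dots> = M * m" using F unfolding feasible_def by (simp add: sum_distrib_right[symmetric])
  also have "\<dots> = (\<Sum>p\<in>P. g p * m)" using G unfolding feasible_def by (simp add: sum_distrib_right[symmetric])
  also have "\<dots> \<le> (\<Sum>p\<in>P. g p * pc p)"
    using G mle unfolding feasible_def by (intro sum_mono mult_left_mono) auto
  also have "\<dots> = (\<Sum>e\<in>E. load P g e * ce e (load P f e))"
    unfolding pc_def path_cost_def by (rule sum_load_swap[OF fin(1,2) sub, symmetric])
  finally show ?thesis by (simp add: mult.commute)
qed

lemma wardrop_edge_le:
  assumes fin: "finite P" and W: "wardrop P ce M f" and q: "q \<in> P"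
    and e: "0 < load P f e"
    and nn: "\<forall>e. 0 \<le> ce e (load P f e)"
  shows "ce e (load P f e) \<le> path_cost P ce f q"
proof -
  have "\<exists>p\<in>{p\<in>P. e \<in> set p}. f p > 0"
  proof (rule ccontr)
    assume "\<not> ?thesis"
    then have "\<forall>p\<in>{p\<in>P. e \<in> set p}. f p \<le> 0" by (simp add: not_less)
    then have "load P f e \<le> 0" unfolding load_def by (blast intro: sum_nonpos)
    with e show False by simp
  qed
  then obtain p where p: "p \<in> P" "e \<in> set p" "f p > 0" by auto
  have "ce e (load P f e) \<le> path_cost P ce f p"
    unfolding path_cost_def by (rule member_le_sum) (use p nn in auto)
  also have "\<dots> \<le> path_cost P ce f q" using W p q unfolding wardrop_def by auto
  finally show ?thesis .
qed



definition Fint :: "(real \<Rightarrow> real) \<Rightarrow> real \<Rightarrow> real" where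
  "Fint h z = integral {0..z} h"

lemma Fint_bounds:
  assumes h: "continuous_on {0..} h" "mono_on {0..} h" and z: "0 \<le> z" "z \<le> z'"
  shows "(z'-z) * h z \<le> Fint h z' - Fint h z" "Fint h z' - Fint h z \<le> (z'-z) * h z'"
proof -
  have int: "h integrable_on {0..z'}"
    by (rule integrable_continuous_interval, rule continuous_on_subset[OF h(1)]) auto
  have int2: "h integrable_on {z..z'}"
    by (rule integrable_continuous_interval, rule continuous_on_subset[OF h(1)]) (use z in auto)
  have split: "Fint h z' - Fint h z = integral {z..z'} h"
    using Henstock_Kurzweil_Integration.integral_combine[of 0 z z' h] int z unfolding Fint_def by simp
  have c1: "(\<lambda>_. h z) integrable_on {z..z'}" "(\<lambda>_. h z') integrable_on {z..z'}"
    by (auto intro: integrable_continuous_interval)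
  have "integral {z..z'} (\<lambda>_. h z) \<le> integral {z..z'} h"
    by (rule integral_le[OF c1(1) int2]) (use z in \<open>auto intro: mono_onD[OF h(2)]\<close>)
  then show "(z'-z) * h z \<le> Fint h z' - Fint h z" using split z by (simp add: content_real)
  have "integral {z..z'} h \<le> integral {z..z'} (\<lambda>_. h z')"
    by (rule integral_le[OF int2 c1(2)]) (use z in \<open>auto intro: mono_onD[OF h(2)]\<close>)
  then show "Fint h z' - Fint h z \<le> (z'-z) * h z'" using split z by (simp add: content_real)
qed

lemma Fint_0: "Fint h 0 = 0"
  unfolding Fint_def using integral_refl[of 0 h] by (simp add: cbox_interval)

lemma Fint_nonneg:
  assumes h: "continuous_on {0..} h" "mono_on {0..} h" "\<forall>x\<ge>0. 0 \<le> h x" and z: "0 \<le> z"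
  shows "0 \<le> Fint h z"
proof -
  have "0 \<le> z * h 0" using h(3) z by simp
  then show ?thesis using Fint_bounds(1)[OF h(1,2) order_refl z] Fint_0[of h] by simp
qed

lemma Fint_cont:
  assumes h: "continuous_on {0..} h"
  shows "continuous_on {0..K} (Fint h)"
proof -
  have "h integrable_on {0..K}"
    by (rule integrable_continuous_interval, rule continuous_on_subset[OF h(1)]) auto
  then show ?thesis unfolding Fint_def by (rule indefinite_integral_continuous_1)
qed

lemma edge_step:
  assumes h: "continuous_on {0..} h" "mono_on {0..} h" and x: "0 \<le> x" and t: "0 \<le> t"
    and tp: "bp \<Longrightarrow> t \<le> x"
  shows "Fint h (x + (if bq then t else 0) - (if bp then t else 0)) - Fint h x
     \<le> (if bq then t * h (x+t) else 0) - (if bp then t * h (x - t) else 0)"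
proof (cases bq; cases bp)
  assume "bq" "bp"
  then have "h (x - t) \<le> h (x + t)" using x t tp by (auto intro: mono_onD[OF h(2)])
  then show ?thesis using \<open>bq\<close> \<open>bp\<close> t by (simp add: algebra_simps mult_left_mono)
next
  assume "bq" "\<not> bp"
  then show ?thesis using Fint_bounds(2)[OF h, of x "x+t"] x t by simp
next
  assume "\<not> bq" "bp"
  then show ?thesis using Fint_bounds(1)[OF h, of "x-t" x] x t tp by simp
next
  assume "\<not> bq" "\<not> bp"
  then show ?thesis by simp
qed

lemma finite_subseq:
  fixes X :: "nat \<Rightarrow> 'a \<Rightarrow> real"
  assumes "finite I" "\<forall>n. \<forall>i\<in>I. X n i \<in> {a..b::real}"
  shows "\<exists>r. strict_mono r \<and> (\<forall>i\<in>I. \<exists>l. (\<lambda>n. X (r n) i) \<longlonglongrightarrow> l)"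
  using assms
proof (induction I rule: finite_induct)
  case empty
  have "strict_mono (id::nat\<Rightarrow>nat)" by (simp add: strict_mono_def)
  then show ?case by blast
next
  case (insert j I)
  then obtain r where r: "strict_mono r" "\<forall>i\<in>I. \<exists>l. (\<lambda>n. X (r n) i) \<longlonglongrightarrow> l" by auto
  have "\<And>n. (\<lambda>n. X (r n) j) n \<in> {a..b}" using insert(4) by auto
  from compact_Icc[of a b, unfolded compact_def, rule_format, of "\<lambda>n. X (r n) j", OF this]
  obtain l s where s: "strict_mono s" "((\<lambda>n. X (r n) j) \<circ> s) \<longlonglongrightarrow> l"
    by blast
  show ?case
  proof (intro exI[of _ "r \<circ> s"] conjI ballI)
    show "strict_mono (r \<circ> s)" using r(1) s(1) by (rule strict_mono_o)
    fix i assume "i \<in> insert j I"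
    then show "\<exists>l. (\<lambda>n. X ((r \<circ> s) n) i) \<longlonglongrightarrow> l"
    proof
      assume "i = j" then show ?thesis using s(2) by (auto simp: o_def)
    next
      assume "i \<in> I"
      then obtain l' where "(\<lambda>n. X (r n) i) \<longlonglongrightarrow> l'" using r(2) by auto
      from LIMSEQ_subseq_LIMSEQ[OF this s(1)] show ?thesis by (auto simp: o_def)
    qed
  qed
qed

definition pot :: "'e set \<Rightarrow> 'e list set \<Rightarrow> ('e \<Rightarrow> real \<Rightarrow> real) \<Rightarrow> ('e list \<Rightarrow> real) \<Rightarrow> real" where
  "pot E P ce f = (\<Sum>e\<in>E. Fint (ce e) (load P f e))"

lemma minimizer_wardrop:
  assumes fin: "finite E" "finite P" and sub: "\<forall>p\<in>P. set p \<subseteq> E"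
    and ce: "\<forall>e\<in>E. continuous_on {0..} (ce e) \<and> mono_on {0..} (ce e) \<and> (\<forall>x\<ge>0. 0 \<le> ce e x)"
    and F: "feasible P M f" and mn: "\<forall>g. feasible P M g \<longrightarrow> pot E P ce f \<le> pot E P ce g"
  shows "wardrop P ce M f"
  unfolding wardrop_def
proof (intro conjI F ballI impI)
  fix p q assume p: "p \<in> P" and q: "q \<in> P" and fp: "0 < f p"
  show "path_cost P ce f p \<le> path_cost P ce f q"
  proof (rule ccontr)
    assume "\<not> ?thesis"
    then have lt: "path_cost P ce f q < path_cost P ce f p" by simp
    then have pq: "p \<noteq> q" by auto
    define x where "x = load P f"
    have x0: "0 \<le> x e" for e using load_nonneg[OF F] unfolding x_def by auto
    have xp: "f p \<le> x e" if "e \<in> set p" for e using load_ge[OF fin(2) F p that] unfolding x_def .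
    define ft where "ft t = (\<lambda>r. f r + (if r = q then t else 0) - (if r = p then t else 0))" for t :: real
    have feas: "feasible P M (ft t)" if "0 \<le> t" "t \<le> f p" for t
    proof -
      have "\<forall>r\<in>P. 0 \<le> ft t r" using F that pq unfolding ft_def feasible_def by auto
      moreover have "sum (ft t) P = M"
        using F p q fin unfolding ft_def feasible_def by (simp add: sum.distrib sum_subtractf)
      ultimately show ?thesis unfolding feasible_def by auto
    qed
    have ld: "load P (ft t) e = x e + (if e \<in> set q then t else 0) - (if e \<in> set p then t else 0)" for t e
      unfolding load_def ft_def x_def using p q fin
      by (simp add: sum.distrib sum_subtractf)
    define D where "D t = (\<Sum>e\<in>set q. ce e (x e + t)) - (\<Sum>e\<in>set p. ce e (x e - t))" for t
    have bound: "pot E P ce (ft t) - pot E P ce f \<le> t * D t" if t: "0 \<le> t" "t \<le> f p" for t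
    proof -
      have "pot E P ce (ft t) - pot E P ce f = (\<Sum>e\<in>E. Fint (ce e) (load P (ft t) e) - Fint (ce e) (x e))"
        unfolding pot_def x_def by (simp add: sum_subtractf)
      also have "\<dots> \<le> (\<Sum>e\<in>E. (if e \<in> set q then t * ce e (x e + t) else 0) - (if e \<in> set p then t * ce e (x e - t) else 0))"
      proof (rule sum_mono)
        fix e assume e: "e \<in> E"
        have tx: "e \<in> set p \<Longrightarrow> t \<le> x e" using xp t by force
        show "Fint (ce e) (load P (ft t) e) - Fint (ce e) (x e) \<le> (if e \<in> set q then t * ce e (x e + t) else 0) - (if e \<in> set p then t * ce e (x e - t) else 0)"
          unfolding ld using edge_step[of "ce e" "x e" t "e \<in> set p" "e \<in> set q", OF _ _ x0 t(1) tx] ce e by blast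
      qed
      also have "\<dots> = (\<Sum>e\<in>E \<inter> set q. t * ce e (x e + t)) - (\<Sum>e\<in>E \<inter> set p. t * ce e (x e - t))"
        using fin by (simp add: sum_subtractf sum.inter_restrict)
      also have "\<dots> = t * D t"
        using sub p q unfolding D_def by (simp add: Int_absorb1 sum_distrib_left right_diff_distrib)
      finally show ?thesis .
    qed
    have Dlim: "(D \<longlongrightarrow> path_cost P ce f q - path_cost P ce f p) (at_right 0)"
      unfolding D_def path_cost_def x_def[symmetric]
    proof (intro tendsto_diff tendsto_sum)
      fix e assume e: "e \<in> set q"
      then have eE: "e \<in> E" using sub q by auto
      have "((\<lambda>t. x e + t) \<longlongrightarrow> x e + 0) (at_right 0)" by (intro tendsto_intros)
      moreover have "\<forall>\<^sub>F t in at_right 0. x e + t \<in> {0..}"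
        using eventually_at_right_less[of 0] by eventually_elim (use x0 in auto)
      ultimately show "((\<lambda>t. ce e (x e + t)) \<longlongrightarrow> ce e (x e)) (at_right 0)"
        using continuous_on_tendsto_compose[of "{0..}" "ce e" "\<lambda>t. x e + t" "x e"] ce eE x0 by auto
    next
      fix e assume e: "e \<in> set p"
      then have eE: "e \<in> E" using sub p by auto
      have "((\<lambda>t. x e - t) \<longlongrightarrow> x e - 0) (at_right 0)" by (intro tendsto_intros)
      moreover have "\<forall>\<^sub>F t in at_right 0. x e - t \<in> {0..}"
        using eventually_at_right_real[OF fp] by eventually_elim (use xp[OF e] in auto)
      ultimately show "((\<lambda>t. ce e (x e - t)) \<longlongrightarrow> ce e (x e)) (at_right 0)"
        using continuous_on_tendsto_compose[of "{0..}" "ce e" "\<lambda>t. x e - t" "x e"] ce eE x0 by auto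
    qed
    have "\<forall>\<^sub>F t in at_right 0. D t < 0"
      by (rule order_tendstoD(2)[OF Dlim]) (use lt in simp)
    moreover have "\<forall>\<^sub>F t in at_right (0::real). t \<in> {0<..<f p}" by (rule eventually_at_right_real[OF fp])
    ultimately have "\<forall>\<^sub>F t in at_right (0::real). D t < 0 \<and> t \<in> {0<..<f p}" by eventually_elim auto
    then obtain t where t: "D t < 0" "0 < t" "t < f p"
      using eventually_happens[of _ "at_right (0::real)"] by auto
    have "pot E P ce (ft t) - pot E P ce f \<le> t * D t" using bound t by auto
    also have "\<dots> < 0" using t by (simp add: mult_pos_neg)
    finally have "pot E P ce (ft t) < pot E P ce f" by simp
    moreover have "pot E P ce f \<le> pot E P ce (ft t)" using mn feas t by auto
    ultimately show False by simp
  qed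
qed

lemma wardrop_exists:
  assumes fin: "finite E" "finite P" "P \<noteq> {}" and sub: "\<forall>p\<in>P. set p \<subseteq> E"
    and ce: "\<forall>e\<in>E. continuous_on {0..} (ce e) \<and> mono_on {0..} (ce e) \<and> (\<forall>x\<ge>0. 0 \<le> ce e x)"
    and M: "0 \<le> M"
  shows "\<exists>f. wardrop P ce M f"
proof -
  define S where "S = {f. feasible P M f}"
  define \<Phi> where "\<Phi> = pot E P ce"
  obtain p0 where p0: "p0 \<in> P" using fin(3) by auto
  define f0 where "f0 = (\<lambda>p. if p = p0 then M else 0)"
  have f0S: "f0 \<in> S" unfolding S_def feasible_def f0_def using p0 M fin by auto
  have Sne: "\<Phi> ` S \<noteq> {}" using f0S by auto
  have potnn: "0 \<le> \<Phi> f" if "f \<in> S" for f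
    unfolding \<Phi>_def pot_def
  proof (rule sum_nonneg)
    fix e assume "e \<in> E"
    then show "0 \<le> Fint (ce e) (load P f e)"
      using Fint_nonneg[of "ce e" "load P f e"] ce load_nonneg[of P M f e] that unfolding S_def by auto
  qed
  have bdd: "bdd_below (\<Phi> ` S)" using potnn by (auto intro: bdd_belowI[of _ 0])
  define I where "I = Inf (\<Phi> ` S)"
  have "\<forall>n. \<exists>f\<in>S. \<Phi> f < I + inverse (real (Suc n))"
  proof
    fix n
    have "I < I + inverse (real (Suc n))" by simp
    from cInf_lessD[OF Sne this[unfolded I_def]] show "\<exists>f\<in>S. \<Phi> f < I + inverse (real (Suc n))"
      unfolding I_def by auto
  qed
  then obtain X where X: "\<And>n. X n \<in> S" "\<And>n. \<Phi> (X n) < I + inverse (real (Suc n))" by metis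
  have box: "\<forall>n. \<forall>p\<in>P. X n p \<in> {0..M}"
  proof (intro allI ballI)
    fix n p assume p: "p \<in> P"
    have F: "feasible P M (X n)" using X(1) unfolding S_def by auto
    then have "X n p \<le> sum (X n) P" using fin p unfolding feasible_def by (intro member_le_sum) auto
    then show "X n p \<in> {0..M}" using F p unfolding feasible_def by auto
  qed
  obtain r where r: "strict_mono r" "\<forall>p\<in>P. \<exists>l. (\<lambda>n. X (r n) p) \<longlonglongrightarrow> l"
    using finite_subseq[OF fin(2) box] by blast
  define g where "g p = lim (\<lambda>n. X (r n) p)" for p
  have conv: "(\<lambda>n. X (r n) p) \<longlonglongrightarrow> g p" if "p \<in> P" for p
    using r(2) that unfolding g_def by (auto intro: limI[symmetric] simp: limI)
  have gS: "g \<in> S"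
  proof -
    have "0 \<le> g p" if "p \<in> P" for p
      by (rule LIMSEQ_le_const[OF conv[OF that]]) (use box that in auto)
    moreover have "(\<lambda>n. \<Sum>p\<in>P. X (r n) p) \<longlonglongrightarrow> (\<Sum>p\<in>P. g p)"
      by (rule tendsto_sum) (use conv in auto)
    moreover have "(\<lambda>n. \<Sum>p\<in>P. X (r n) p) = (\<lambda>n. M)"
      using X(1) unfolding S_def feasible_def by auto
    ultimately have "(\<lambda>n. M) \<longlonglongrightarrow> (\<Sum>p\<in>P. g p)" by simp
    then have "(\<Sum>p\<in>P. g p) = M" using LIMSEQ_unique[OF _ tendsto_const] by metis
    with \<open>\<And>p. p \<in> P \<Longrightarrow> 0 \<le> g p\<close> show ?thesis unfolding S_def feasible_def by auto
  qed
  have potconv: "(\<lambda>n. \<Phi> (X (r n))) \<longlonglongrightarrow> \<Phi> g"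
    unfolding \<Phi>_def pot_def
  proof (rule tendsto_sum)
    fix e assume e: "e \<in> E"
    have lc: "(\<lambda>n. load P (X (r n)) e) \<longlonglongrightarrow> load P g e"
      unfolding load_def by (rule tendsto_sum) (use conv in auto)
    have mem: "load P g e \<in> {0..M}"
      using load_nonneg[of P M g e] load_le[OF fin(2), of M g e] gS unfolding S_def by auto
    have ev: "\<forall>\<^sub>F n in sequentially. load P (X (r n)) e \<in> {0..M}"
    proof (intro always_eventually allI)
      fix n
      have "feasible P M (X (r n))" using X(1) unfolding S_def by auto
      then show "load P (X (r n)) e \<in> {0..M}"
        using load_nonneg[of P M "X (r n)" e] load_le[OF fin(2), of M "X (r n)" e] by auto
    qed
    have cont: "continuous_on {0..M} (Fint (ce e))" using Fint_cont ce e by auto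
    show "(\<lambda>n. Fint (ce e) (load P (X (r n)) e)) \<longlonglongrightarrow> Fint (ce e) (load P g e)"
      by (rule continuous_on_tendsto_compose[OF cont lc mem ev])
  qed
  have "(\<lambda>n. \<Phi> (X (r n))) \<longlonglongrightarrow> I"
  proof (rule tendsto_sandwich[of "\<lambda>n. I" _ _ "\<lambda>n. I + inverse (real (Suc n))"])
    show "\<forall>\<^sub>F n in sequentially. I \<le> \<Phi> (X (r n))"
      using X(1) bdd unfolding I_def by (intro always_eventually allI cInf_lower) auto
    show "\<forall>\<^sub>F n in sequentially. \<Phi> (X (r n)) \<le> I + inverse (real (Suc n))"
    proof (intro always_eventually allI)
      fix n
      have "n \<le> r n" using seq_suble[OF r(1)] .
      then have iv: "inverse (real (Suc (r n))) \<le> inverse (real (Suc n))"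
        by (intro le_imp_inverse_le) auto
      have "\<Phi> (X (r n)) < I + inverse (real (Suc (r n)))" by (rule X(2))
      with iv show "\<Phi> (X (r n)) \<le> I + inverse (real (Suc n))" by linarith
    qed
  qed (rule tendsto_const, rule LIMSEQ_inverse_real_of_nat_add)
  then have gI: "\<Phi> g = I" using potconv LIMSEQ_unique by blast
  have "\<forall>h. feasible P M h \<longrightarrow> pot E P ce g \<le> pot E P ce h"
    using gI bdd unfolding I_def \<Phi>_def S_def by (auto intro!: cInf_lower)
  then show ?thesis using minimizer_wardrop[OF fin(1,2) sub ce] gS unfolding S_def by blast
qed



lemma lin_at_top: "0 < (s::real) \<Longrightarrow> filterlim (\<lambda>t. t * s) at_top at_top"
  using filterlim_tendsto_pos_mult_at_top[OF tendsto_const[of s] _ filterlim_ident]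
  by (simp add: mult.commute)

definition Lf :: "(real \<Rightarrow> real) \<Rightarrow> real \<Rightarrow> real" where
  "Lf c s = Lim at_top (\<lambda>t. c (t * s) / c t)"

lemma Lf_tendsto:
  assumes rv: "regularly_varying_at_top c" and s: "0 < s"
  shows "((\<lambda>t. c (t * s) / c t) \<longlongrightarrow> Lf c s) at_top" "Lf c s \<noteq> 0"
proof -
  obtain L where L: "L \<noteq> 0" "((\<lambda>t. c (t * s) / c t) \<longlongrightarrow> L) at_top"
    using rv s unfolding regularly_varying_at_top_def by blast
  have "Lf c s = L" unfolding Lf_def by (rule tendsto_Lim[OF _ L(2)]) simp
  then show "((\<lambda>t. c (t * s) / c t) \<longlongrightarrow> Lf c s) at_top" "Lf c s \<noteq> 0" using L by auto
qed

lemma ratio_tendsto: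
  assumes cpos: "\<forall>x>0. 0 < c x" and rv: "regularly_varying_at_top c"
    and h: "((\<lambda>x. h x / c x) \<longlongrightarrow> a) at_top" and s: "0 < s"
  shows "((\<lambda>t. h (t * s) / c t) \<longlongrightarrow> a * Lf c s) at_top"
proof -
  have lim1: "((\<lambda>t. h (t * s) / c (t * s)) \<longlongrightarrow> a) at_top"
    using filterlim_compose[OF h lin_at_top[OF s]] by simp
  have "((\<lambda>t. h (t * s) / c (t * s) * (c (t * s) / c t)) \<longlongrightarrow> a * Lf c s) at_top"
    by (rule tendsto_mult[OF lim1 Lf_tendsto(1)[OF rv s]])
  moreover have "\<forall>\<^sub>F t in at_top. h (t * s) / c (t * s) * (c (t * s) / c t) = h (t * s) / c t"
    using eventually_gt_at_top[of 0]
  proof eventually_elim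
    case (elim t)
    then have "0 < c (t * s)" using cpos s by auto
    then show ?case by simp
  qed
  ultimately show ?thesis by (rule Lim_transform_eventually)
qed

lemma Lf_nonneg:
  assumes cpos: "\<forall>x>0. 0 < c x" and rv: "regularly_varying_at_top c" and s: "0 < s"
  shows "0 < Lf c s"
proof -
  have "0 \<le> Lf c s"
  proof (rule tendsto_lowerbound[OF Lf_tendsto(1)[OF rv s]])
    show "\<forall>\<^sub>F t in at_top. 0 \<le> c (t * s) / c t"
      using eventually_gt_at_top[of 0]
    proof eventually_elim
      case (elim t)
      have "0 < t * s" using elim s by simp
      then have "0 < c (t * s)" "0 < c t" using cpos elim by auto
      then show ?case by simp
    qed
  qed simp
  then show ?thesis using Lf_tendsto(2)[OF rv s] by simp
qed

lemma Lf_1: assumes cpos: "\<forall>x>0. 0 < c x" and rv: "regularly_varying_at_top c" shows "Lf c 1 = 1"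
proof -
  have "((\<lambda>t. c (t*1) / c t) \<longlongrightarrow> 1) at_top"
  proof (rule tendsto_cong[THEN iffD1, OF _ tendsto_const])
    show "\<forall>\<^sub>F t in at_top. 1 = c (t*1) / c t"
      using eventually_gt_at_top[of 0] by eventually_elim (use cpos in \<open>auto\<close>)
  qed
  then show ?thesis using tendsto_unique[OF _ Lf_tendsto(1)[OF rv, of 1]] by simp
qed

lemma Lf_mult:
  assumes cpos: "\<forall>x>0. 0 < c x" and rv: "regularly_varying_at_top c" and s: "0 < s" and u: "0 < u"
  shows "Lf c (s * u) = Lf c s * Lf c u"
proof -
  have lim1: "((\<lambda>t. c ((t * s) * u) / c (t * s)) \<longlongrightarrow> Lf c u) at_top"
    using filterlim_compose[OF Lf_tendsto(1)[OF rv u] lin_at_top[OF s]] by simp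
  have "((\<lambda>t. c ((t * s) * u) / c (t * s) * (c (t * s) / c t)) \<longlongrightarrow> Lf c u * Lf c s) at_top"
    by (rule tendsto_mult[OF lim1 Lf_tendsto(1)[OF rv s]])
  moreover have "\<forall>\<^sub>F t in at_top. c ((t * s) * u) / c (t * s) * (c (t * s) / c t) = c (t*(s * u)) / c t"
    using eventually_gt_at_top[of 0]
  proof eventually_elim
    case (elim t)
    then have "0 < c (t * s)" using cpos s by auto
    then show ?case by (simp add: mult.assoc)
  qed
  ultimately have "((\<lambda>t. c (t*(s * u)) / c t) \<longlongrightarrow> Lf c u * Lf c s) at_top"
    by (rule Lim_transform_eventually)
  then show ?thesis using tendsto_unique[OF _ Lf_tendsto(1)[OF rv, of "s * u"]] s u by (simp add: mult.commute)
qed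

lemma Lf_mono:
  assumes cpos: "\<forall>x>0. 0 < c x" and rv: "regularly_varying_at_top c"
    and h: "((\<lambda>x. h x / c x) \<longlongrightarrow> a) at_top" "0 < a" and hm: "mono_on {0..} h"
    and s: "0 < s" "s \<le> s'"
  shows "Lf c s \<le> Lf c s'"
proof -
  have "a * Lf c s \<le> a * Lf c s'"
  proof (rule tendsto_le[OF _ ratio_tendsto[OF cpos rv h(1)] ratio_tendsto[OF cpos rv h(1)]])
    show "\<forall>\<^sub>F t in at_top. h (t * s) / c t \<le> h (t * s') / c t"
      using eventually_gt_at_top[of 0]
    proof eventually_elim
      case (elim t)
      have "0 \<le> t * s" "t * s \<le> t * s'" using s elim by (simp, simp add: mult_left_mono)
      then have "h (t * s) \<le> h (t * s')" by (intro mono_onD[OF hm]) auto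
      moreover have "0 < c t" using cpos elim by auto
      ultimately show ?case by (simp add: divide_right_mono)
    qed
    show "at_top \<noteq> (bot :: real filter)" by simp
    show "0 < s" "0 < s'" using s by auto
  qed
  then show ?thesis using h(2) by simp
qed

lemma additive_mono_linear:
  fixes \<phi> :: "real \<Rightarrow> real"
  assumes add: "\<And>u v. \<phi> (u+v) = \<phi> u + \<phi> v" and mono: "\<And>u v. u \<le> v \<Longrightarrow> \<phi> u \<le> \<phi> v"
  shows "\<phi> u = u * \<phi> 1"
proof -
  define \<rho> where "\<rho> = \<phi> 1"
  have z: "\<phi> 0 = 0" using add[of 0 0] by simp
  have \<rho>0: "0 \<le> \<rho>" using mono[of 0 1] z unfolding \<rho>_def by simp
  have nat: "\<phi> (real n * v) = real n * \<phi> v" for n v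
  proof (induction n)
    case 0 then show ?case using z by simp
  next
    case (Suc n)
    have "\<phi> (real (Suc n) * v) = \<phi> (real n * v + v)" by (simp add: algebra_simps)
    also have "\<dots> = real n * \<phi> v + \<phi> v" using add Suc by simp
    finally show ?case by (simp add: algebra_simps)
  qed
  have neg: "\<phi> (-v) = - \<phi> v" for v using add[of v "-v"] z by simp
  have int: "\<phi> (of_int k) = of_int k * \<rho>" for k :: int
  proof (cases "k \<ge> 0")
    case True
    then show ?thesis using nat[of "nat k" 1] unfolding \<rho>_def by simp
  next
    case False
    then have "\<phi> (of_int (-k)) = of_int (-k) * \<rho>" using nat[of "nat (-k)" 1] unfolding \<rho>_def by simp
    then show ?thesis using neg[of "of_int k"] by simp
  qed
  have bnd: "\<bar>\<phi> u - u * \<rho>\<bar> \<le> \<rho> / real n" if n: "n \<ge> 1" for n :: nat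
  proof -
    define k where "k = \<lfloor>real n * u\<rfloor>"
    have k1: "of_int k \<le> real n * u" "real n * u \<le> of_int k + 1"
      unfolding k_def using of_int_floor_le real_of_int_floor_add_one_gt[of "real n * u"] by auto
    have "\<phi> (of_int k) \<le> \<phi> (real n * u)" "\<phi> (real n * u) \<le> \<phi> (of_int (k+1))"
      using k1 by (auto intro: mono)
    then have a: "of_int k * \<rho> \<le> real n * \<phi> u" "real n * \<phi> u \<le> (of_int k + 1) * \<rho>"
      using int[of k] int[of "k+1"] nat[of n u] by auto
    have b: "of_int k * \<rho> \<le> real n * u * \<rho>" "real n * u * \<rho> \<le> (of_int k + 1) * \<rho>"
      using k1 \<rho>0 by (auto intro: mult_right_mono)
    have "\<bar>real n * \<phi> u - real n * u * \<rho>\<bar> \<le> \<rho>" using a b by (auto simp: algebra_simps)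
    moreover have "real n * \<phi> u - real n * u * \<rho> = real n * (\<phi> u - u * \<rho>)"
      by (simp add: algebra_simps)
    then have "\<bar>real n * \<phi> u - real n * u * \<rho>\<bar> = \<bar>\<phi> u - u * \<rho>\<bar> * real n"
      by (simp only: abs_mult abs_of_nat mult.commute)
    ultimately have "\<bar>\<phi> u - u * \<rho>\<bar> * real n \<le> \<rho>" by simp
    then show ?thesis using n by (simp add: pos_le_divide_eq)
  qed
  show ?thesis
  proof (rule ccontr)
    assume ne: "\<phi> u \<noteq> u * \<phi> 1"
    define d where "d = \<bar>\<phi> u - u * \<rho>\<bar>"
    have d: "0 < d" using ne unfolding d_def \<rho>_def by simp
    obtain n :: nat where n: "\<rho> / d < real n" using reals_Archimedean2 by blast
    have "0 \<le> \<rho> / d" using \<rho>0 d by simp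
    then have "0 < real n" using n by linarith
    then have n1: "n \<ge> 1" by simp
    have "d \<le> \<rho> / real n" using bnd[OF n1] unfolding d_def .
    moreover have "\<rho> < real n * d" using n d by (simp add: pos_divide_less_eq)
    then have "\<rho> / real n < d" using n1 by (simp add: pos_divide_less_eq mult.commute)
    ultimately show False by simp
  qed
qed

lemma Lf_powr:
  assumes cpos: "\<forall>x>0. 0 < c x" and rv: "regularly_varying_at_top c"
    and h: "((\<lambda>x. h x / c x) \<longlongrightarrow> a) at_top" "0 < a" and hm: "mono_on {0..} h"
  shows "\<exists>\<rho>\<ge>0. \<forall>s>0. Lf c s = s powr \<rho>"
proof -
  define \<phi> where "\<phi> u = ln (Lf c (exp u))" for u
  have pos: "0 < Lf c s" if "0 < s" for s using Lf_nonneg[OF cpos rv that] .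
  have add: "\<phi> (u+v) = \<phi> u + \<phi> v" for u v
    unfolding \<phi>_def using Lf_mult[OF cpos rv, of "exp u" "exp v"] pos[of "exp u"] pos[of "exp v"]
    by (simp add: exp_add ln_mult)
  have mono: "\<phi> u \<le> \<phi> v" if "u \<le> v" for u v
    unfolding \<phi>_def using Lf_mono[OF cpos rv h hm, of "exp u" "exp v"] that pos[of "exp u"] by simp
  define \<rho> where "\<rho> = \<phi> 1"
  have lin: "\<phi> u = u * \<rho>" for u unfolding \<rho>_def by (rule additive_mono_linear[OF add mono])
  have z: "\<phi> 0 = 0" unfolding \<phi>_def using Lf_1[OF cpos rv] by simp
  have "0 \<le> \<rho>" using mono[of 0 1] z unfolding \<rho>_def by linarith
  moreover have "Lf c s = s powr \<rho>" if s: "0 < s" for s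
  proof -
    have "Lf c s = exp (\<phi> (ln s))" unfolding \<phi>_def using s pos[OF s] by simp
    also have "\<dots> = s powr \<rho>" using s lin[of "ln s"] by (simp add: powr_def mult.commute)
    finally show ?thesis .
  qed
  ultimately show ?thesis by blast
qed



lemma polya:
  fixes g :: "real \<Rightarrow> real \<Rightarrow> real" and hf :: "real \<Rightarrow> real"
  assumes ab: "a \<le> b"
    and conv: "\<forall>s\<in>{a..b+1}. ((\<lambda>M. g M s) \<longlongrightarrow> hf s) at_top"
    and cont: "continuous_on {a..b+1} hf"
    and mono: "\<forall>\<^sub>F M in at_top. \<forall>s\<in>{a..b+1}. \<forall>s'\<in>{a..b+1}. s \<le> s' \<longrightarrow> g M s \<le> g M s'"
    and eps: "0 < \<epsilon>"
  shows "\<forall>\<^sub>F M in at_top. \<forall>s\<in>{a..b}. \<bar>g M s - hf s\<bar> \<le> \<epsilon>"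
proof -
  have "uniformly_continuous_on {a..b+1} hf" by (rule compact_uniformly_continuous[OF cont compact_Icc])
  moreover have "0 < \<epsilon>/2" using eps by simp
  ultimately obtain d where d: "d > 0" "\<forall>x\<in>{a..b+1}. \<forall>x'\<in>{a..b+1}. dist x' x < d \<longrightarrow> dist (hf x') (hf x) < \<epsilon>/2"
    unfolding uniformly_continuous_on_def by blast
  define h where "h = min (d/2) (1/2)"
  have h: "0 < h" "h < d" "h \<le> 1/2" using d by (auto simp: h_def)
  define N where "N = nat \<lceil>(b-a)/h\<rceil> + 1"
  define pt where "pt i = a + real i * h" for i :: nat
  have q0: "0 \<le> (b-a)/h" using ab h by simp
  have NN: "(b-a)/h \<le> real (nat \<lceil>(b-a)/h\<rceil>)" "real (nat \<lceil>(b-a)/h\<rceil>) < (b-a)/h + 1"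
    using q0 le_of_int_ceiling[of "(b-a)/h"] ceiling_correct[of "(b-a)/h"] by auto
  have ptin: "pt i \<in> {a..b+1}" if "i \<le> N" for i
  proof -
    have "real i \<le> real N" using that by simp
    also have "\<dots> \<le> (b-a)/h + 2" unfolding N_def using NN by simp
    finally have "real i * h \<le> ((b-a)/h + 2) * h" using h by (simp add: mult_right_mono)
    also have "\<dots> = (b - a) + 2 * h" using h by (simp add: field_simps)
    finally have "real i * h \<le> b - a + 1" using h by linarith
    moreover have "0 \<le> real i * h" using h by simp
    ultimately show ?thesis unfolding pt_def by auto
  qed
  have ev: "\<forall>\<^sub>F M in at_top. \<forall>i\<in>{..N}. \<bar>g M (pt i) - hf (pt i)\<bar> < \<epsilon>/2"
  proof (rule eventually_ball_finite)
    show "\<forall>i\<in>{..N}. \<forall>\<^sub>F M in at_top. \<bar>g M (pt i) - hf (pt i)\<bar> < \<epsilon>/2"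
    proof
      fix i assume "i \<in> {..N}"
      then have "pt i \<in> {a..b+1}" using ptin by auto
      from tendstoD[OF conv[rule_format, OF this] \<open>0 < \<epsilon>/2\<close>]
      show "\<forall>\<^sub>F M in at_top. \<bar>g M (pt i) - hf (pt i)\<bar> < \<epsilon>/2" by (simp add: dist_real_def)
    qed
  qed simp
  show ?thesis using ev mono
  proof eventually_elim
    case (elim M)
    show ?case
    proof
      fix s assume s: "s \<in> {a..b}"
      define i where "i = nat \<lfloor>(s-a)/h\<rfloor>"
      have qs: "0 \<le> (s-a)/h" using s h by simp
      have ri: "real i \<le> (s-a)/h" "(s-a)/h < real i + 1"
        unfolding i_def using qs of_int_floor_le[of "(s-a)/h"] real_of_int_floor_add_one_gt[of "(s-a)/h"] by auto
      have "real i * h \<le> s - a" using ri(1) h by (simp add: pos_le_divide_eq)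
      then have p1: "pt i \<le> s" unfolding pt_def by simp
      have "s - a < (real i + 1) * h" using ri(2) h by (simp add: pos_divide_less_eq)
      then have p2: "s < pt (Suc i)" unfolding pt_def by (simp add: algebra_simps)
      have "(s-a)/h \<le> (b-a)/h" using s h by (simp add: divide_right_mono)
      then have "real i \<le> real (nat \<lceil>(b-a)/h\<rceil>)" using ri(1) NN(1) by linarith
      then have iN: "Suc i \<le> N" unfolding N_def by simp
      have pi: "pt i \<in> {a..b+1}" "pt (Suc i) \<in> {a..b+1}" using ptin iN by auto
      have sin: "s \<in> {a..b+1}" using s by auto
      have step: "pt (Suc i) - pt i = h" unfolding pt_def by (simp add: algebra_simps)
      have "dist (pt i) s < d" using p1 p2 step h by (simp add: dist_real_def)
      then have c1: "\<bar>hf (pt i) - hf s\<bar> < \<epsilon>/2" using d(2) pi sin by (auto simp: dist_real_def)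
      have "dist (pt (Suc i)) s < d" using p1 p2 step h by (simp add: dist_real_def)
      then have c2: "\<bar>hf (pt (Suc i)) - hf s\<bar> < \<epsilon>/2" using d(2) pi sin by (auto simp: dist_real_def)
      have m1: "g M (pt i) \<le> g M s" using elim(2) pi sin p1 by auto
      have m2: "g M s \<le> g M (pt (Suc i))" using elim(2) pi sin p2 by auto
      have e1: "\<bar>g M (pt i) - hf (pt i)\<bar> < \<epsilon>/2" using elim(1) iN by auto
      have e2: "\<bar>g M (pt (Suc i)) - hf (pt (Suc i))\<bar> < \<epsilon>/2" using elim(1) iN by auto
      show "\<bar>g M s - hf s\<bar> \<le> \<epsilon>" using c1 c2 m1 m2 e1 e2 unfolding abs_le_iff abs_less_iff by linarith
    qed
  qed
qed

lemma young_powr: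
  fixes \<rho> s t :: real
  assumes r: "0 \<le> \<rho>" and s: "0 < s" and t: "0 \<le> t"
  shows "s powr \<rho> * t \<le> \<rho>/(\<rho>+1) * (s * s powr \<rho>) + 1/(\<rho>+1) * (t * t powr \<rho>)"
proof (cases "t = 0")
  case True
  then show ?thesis using r s by simp
next
  case False
  then have t: "0 < t" using t by simp
  have Y: "(s powr (\<rho>+1)) powr (\<rho>/(\<rho>+1)) * (t powr (\<rho>+1)) powr (1/(\<rho>+1))
      \<le> \<rho>/(\<rho>+1) * s powr (\<rho>+1) + 1/(\<rho>+1) * t powr (\<rho>+1)"
    by (rule Youngs_inequality_0) (use r s t in \<open>auto simp: field_simps\<close>)
  have a1: "(s powr (\<rho>+1)) powr (\<rho>/(\<rho>+1)) = s powr \<rho>" using r by (simp add: powr_powr)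
  have a2: "(t powr (\<rho>+1)) powr (1/(\<rho>+1)) = t" using r t by (simp add: powr_powr)
  have a3: "s powr (\<rho>+1) = s * s powr \<rho>" "t powr (\<rho>+1) = t * t powr \<rho>"
    using s t by (simp_all add: powr_add)
  show ?thesis using Y unfolding a1 a2 unfolding a3 .
qed

lemma absmul_le: "\<bar>u\<bar> \<le> e \<Longrightarrow> 0 \<le> w \<Longrightarrow> w \<le> 1 \<Longrightarrow> u * w \<le> (e::real)"
proof -
  assume a: "\<bar>u\<bar> \<le> e" "0 \<le> w" "w \<le> 1"
  have "u * w \<le> \<bar>u\<bar> * w" using a by (simp add: mult_right_mono)
  also have "\<dots> \<le> e * w" using a by (simp add: mult_right_mono)
  also have "\<dots> \<le> e * 1" using a by (intro mult_left_mono) auto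
  finally show ?thesis by simp
qed

lemma arith_case2:
  fixes Gs Gt Hs Ht s t k1 k2 e :: real
  assumes "\<bar>Gs - Hs\<bar> \<le> e" "\<bar>Gt - Ht\<bar> \<le> e" "0 \<le> s" "s \<le> 1" "0 \<le> t" "t \<le> 1"
    "0 \<le> k1" "k1 \<le> 1" "0 \<le> k2" "k2 \<le> 1"
    and Y: "Hs * t \<le> k1 * (s * Hs) + k2 * (t * Ht)"
  shows "Gs * t \<le> k1 * (s * Gs) + k2 * (t * Gt) + 3 * e"
proof -
  have "(Gs - Hs) * t \<le> e" using assms by (intro absmul_le) auto
  then have f1: "Gs * t - Hs * t \<le> e" by (simp add: algebra_simps)
  have "k1 * s \<le> 1" using assms by (simp add: mult_le_one)
  then have "(Hs - Gs) * (k1 * s) \<le> e" using assms by (intro absmul_le) (auto simp: abs_minus_commute)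
  then have f2: "k1 * (s * Hs) - k1 * (s * Gs) \<le> e" by (simp add: algebra_simps)
  have "k2 * t \<le> 1" using assms by (simp add: mult_le_one)
  then have "(Ht - Gt) * (k2 * t) \<le> e" using assms by (intro absmul_le) (auto simp: abs_minus_commute)
  then have f3: "k2 * (t * Ht) - k2 * (t * Gt) \<le> e" by (simp add: algebra_simps)
  show ?thesis using f1 f2 f3 Y by linarith
qed

lemma young_a:
  fixes a \<rho> s t :: real
  assumes a: "0 \<le> a" and r: "0 \<le> \<rho>" and s: "0 < s" and t: "0 \<le> t"
  shows "(a * s powr \<rho>) * t \<le> \<rho>/(\<rho>+1) * (s * (a * s powr \<rho>)) + 1/(\<rho>+1) * (t * (a * t powr \<rho>))"
proof -
  have "a * (s powr \<rho> * t) \<le> a * (\<rho>/(\<rho>+1) * (s * s powr \<rho>) + 1/(\<rho>+1) * (t * t powr \<rho>))"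
    by (rule mult_left_mono[OF young_powr[OF r s t] a])
  then show ?thesis by (simp add: algebra_simps)
qed

lemma key_fin:
  fixes h c :: "real \<Rightarrow> real"
  assumes hm: "mono_on {0..} h" and hnn: "\<forall>x\<ge>0. 0 \<le> h x"
    and cpos: "\<forall>x>0. 0 < c x"
    and pw: "\<forall>s>0. ((\<lambda>M. h (M * s) / c M) \<longlongrightarrow> a * s powr \<rho>) at_top"
    and a: "0 \<le> a" and r: "0 \<le> \<rho>" and \<epsilon>: "0 < \<epsilon>"
  shows "\<forall>\<^sub>F M in at_top. \<forall>x\<in>{0..M}. \<forall>y\<in>{0..M}.
           h x * y \<le> \<rho>/(\<rho>+1) * (x * h x) + 1/(\<rho>+1) * (y * h y) + \<epsilon> * (M * c M)"
proof -
  define e' where "e' = min (\<epsilon>/4) 1"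
  define \<delta> where "\<delta> = min 1 (\<epsilon>/(2*(a+1)))"
  have e': "0 < e'" "e' \<le> \<epsilon>/4" "e' \<le> 1" using \<epsilon> by (auto simp: e'_def)
  have \<delta>: "0 < \<delta>" "\<delta> \<le> 1" using \<epsilon> a by (auto simp: \<delta>_def)
  have "(a+1) * \<delta> \<le> (a+1) * (\<epsilon>/(2*(a+1)))" using a by (intro mult_left_mono) (auto simp: \<delta>_def)
  also have "\<dots> = \<epsilon>/2" using a by (simp add: field_simps)
  finally have a\<delta>: "(a+1) * \<delta> \<le> \<epsilon>/2" .
  define k1 where "k1 = \<rho>/(\<rho>+1)"
  define k2 where "k2 = 1/(\<rho>+1)"
  have k: "0 \<le> k1" "k1 \<le> 1" "0 \<le> k2" "k2 \<le> 1" using r by (auto simp: k1_def k2_def field_simps)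
  define G where "G M s = h (M * s) / c M" for M s
  define hf where "hf s = a * s powr \<rho>" for s
  have conv: "\<forall>s\<in>{\<delta>..1+1}. ((\<lambda>M. G M s) \<longlongrightarrow> hf s) at_top" using pw \<delta> unfolding G_def hf_def by auto
  have cont: "continuous_on {\<delta>..1+1} hf" unfolding hf_def using \<delta> by (intro continuous_intros) auto
  have mono: "\<forall>\<^sub>F M in at_top. \<forall>s\<in>{\<delta>..1+1}. \<forall>s'\<in>{\<delta>..1+1}. s \<le> s' \<longrightarrow> G M s \<le> G M s'"
    using eventually_gt_at_top[of 0]
  proof eventually_elim
    case (elim M)
    show ?case
    proof (intro ballI impI)
      fix s s' assume ss: "s \<in> {\<delta>..1+1}" "s' \<in> {\<delta>..1+1}" "s \<le> s'"
      have "0 \<le> M * s" using elim ss \<delta> by simp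
      moreover have "M * s \<le> M * s'" using elim ss by (simp add: mult_left_mono)
      ultimately have "h (M * s) \<le> h (M * s')" by (intro mono_onD[OF hm]) auto
      moreover have "0 < c M" using cpos elim by auto
      ultimately show "G M s \<le> G M s'" unfolding G_def by (simp add: divide_right_mono)
    qed
  qed
  have U: "\<forall>\<^sub>F M in at_top. \<forall>s\<in>{\<delta>..1}. \<bar>G M s - hf s\<bar> \<le> e'"
    by (rule polya[OF \<delta>(2) conv cont mono e'(1)])
  show ?thesis using U eventually_gt_at_top[of 0]
  proof eventually_elim
    case (elim M)
    have cM: "0 < c M" using cpos elim(2) by auto
    show ?case
    proof (intro ballI)
      fix x y assume x: "x \<in> {0..M}" and y: "y \<in> {0..M}"
      define s where "s = x / M"
      define t where "t = y / M"
      have st: "0 \<le> s" "s \<le> 1" "0 \<le> t" "t \<le> 1" using x y elim(2) by (auto simp: s_def t_def)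
      define Gs where "Gs = h x / c M"
      define Gt where "Gt = h y / c M"
      define G1 where "G1 = h M / c M"
      have GsG: "G M s = Gs" "G M t = Gt" "G M 1 = G1" using elim(2) unfolding G_def Gs_def Gt_def G1_def s_def t_def by auto
      have Gnn: "0 \<le> Gs" "0 \<le> Gt" using hnn x y cM unfolding Gs_def Gt_def by auto
      have "h x \<le> h M" using x by (intro mono_onD[OF hm]) auto
      then have GsG1: "Gs \<le> G1" unfolding Gs_def G1_def using cM by (simp add: divide_right_mono)
      have "\<bar>G M 1 - hf 1\<bar> \<le> e'" using elim(1) \<delta> by auto
      then have G1a: "G1 \<le> a + 1" using GsG e' unfolding hf_def by auto
      have N: "Gs * t \<le> k1 * (s * Gs) + k2 * (t * Gt) + \<epsilon>"
      proof (cases "t < \<delta>")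
        case True
        have "Gs * t \<le> G1 * t" using GsG1 st by (simp add: mult_right_mono)
        also have "\<dots> \<le> (a + 1) * \<delta>" using G1a True st Gnn GsG1 by (intro mult_mono) auto
        finally have "Gs * t \<le> \<epsilon>/2" using a\<delta> by linarith
        moreover have "0 \<le> k1 * (s * Gs)" "0 \<le> k2 * (t * Gt)" using k st Gnn by auto
        ultimately show ?thesis using \<epsilon> by linarith
      next
        case tge: False
        have et: "\<bar>Gt - hf t\<bar> \<le> e'" using elim(1) tge st GsG by auto
        show ?thesis
        proof (cases "s < \<delta>")
          case False
          have es: "\<bar>Gs - hf s\<bar> \<le> e'" using elim(1) False st GsG by auto
          have Y: "hf s * t \<le> k1 * (s * hf s) + k2 * (t * hf t)"
            unfolding hf_def k1_def k2_def using young_a[OF a r _ st(3), of s] False \<delta> by auto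
          have "Gs * t \<le> k1 * (s * Gs) + k2 * (t * Gt) + 3 * e'"
            by (rule arith_case2[OF es et st k Y])
          then show ?thesis using e' by linarith
        next
          case True
          define Gd where "Gd = G M \<delta>"
          have ed: "\<bar>Gd - hf \<delta>\<bar> \<le> e'" using elim(1) \<delta> unfolding Gd_def by auto
          have "h x \<le> h (M * \<delta>)" using x True elim(2) \<delta>
            by (intro mono_onD[OF hm]) (auto simp: s_def pos_divide_less_eq mult.commute)
          then have GsGd: "Gs \<le> Gd" unfolding Gs_def Gd_def G_def using cM by (simp add: divide_right_mono)
          have Y: "hf \<delta> * t \<le> k1 * (\<delta> * hf \<delta>) + k2 * (t * hf t)"
            unfolding hf_def k1_def k2_def using young_a[OF a r \<delta>(1) st(3)] by auto
          have "\<delta> powr \<rho> \<le> 1" using \<delta> r by (intro powr_le1) auto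
          then have "hf \<delta> \<le> a" unfolding hf_def using a by (simp add: mult_left_le)
          then have "\<delta> * hf \<delta> \<le> \<delta> * a" using \<delta> by (simp add: mult_left_mono)
          moreover have "0 \<le> \<delta> * hf \<delta>" unfolding hf_def using \<delta> a by simp
          moreover have "k1 * (\<delta> * hf \<delta>) \<le> 1 * (\<delta> * hf \<delta>)"
            using k \<open>0 \<le> \<delta> * hf \<delta>\<close> by (intro mult_right_mono) auto
          ultimately have "k1 * (\<delta> * hf \<delta>) \<le> \<delta> * a" by linarith
          moreover have "\<delta> * a \<le> (a+1) * \<delta>" using \<delta> by (simp add: algebra_simps)
          ultimately have f0: "k1 * (\<delta> * hf \<delta>) \<le> \<epsilon>/2" using a\<delta> by linarith
          have f1: "Gs * t \<le> Gd * t" using GsGd st by (simp add: mult_right_mono)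
          have "(Gd - hf \<delta>) * t \<le> e'" using ed st by (intro absmul_le) auto
          then have f2: "Gd * t - hf \<delta> * t \<le> e'" by (simp add: algebra_simps)
          have "k2 * t \<le> 1" using k st by (simp add: mult_le_one)
          then have "(hf t - Gt) * (k2 * t) \<le> e'" using et k st by (intro absmul_le) (auto simp: abs_minus_commute)
          then have f3: "k2 * (t * hf t) - k2 * (t * Gt) \<le> e'" by (simp add: algebra_simps)
          have f4: "0 \<le> k1 * (s * Gs)" using k st Gnn by auto
          show ?thesis using f0 f1 f2 f3 f4 Y e' by linarith
        qed
      qed
      have MC: "0 < M * c M" using elim(2) cM by simp
      have "h x * y = (Gs * t) * (M * c M)" unfolding Gs_def t_def using elim(2) cM by (simp add: field_simps)
      also have "\<dots> \<le> (k1 * (s * Gs) + k2 * (t * Gt) + \<epsilon>) * (M * c M)"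
        using N MC by (simp add: mult_right_mono)
      also have "\<dots> = \<rho>/(\<rho>+1) * (x * h x) + 1/(\<rho>+1) * (y * h y) + \<epsilon> * (M * c M)"
      proof -
        have p1: "s * Gs * (M * c M) = x * h x" unfolding s_def Gs_def using elim(2) cM by (simp add: field_simps)
        have p2: "t * Gt * (M * c M) = y * h y" unfolding t_def Gt_def using elim(2) cM by (simp add: field_simps)
        have "(k1 * (s * Gs) + k2 * (t * Gt) + \<epsilon>) * (M * c M) = k1 * (s * Gs * (M * c M)) + k2 * (t * Gt * (M * c M)) + \<epsilon> * (M * c M)"
          by (simp add: algebra_simps)
        also have "\<dots> = k1 * (x * h x) + k2 * (y * h y) + \<epsilon> * (M * c M)" unfolding p1 p2 ..
        finally show ?thesis unfolding k1_def k2_def .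
      qed
      finally show "h x * y \<le> \<rho>/(\<rho>+1) * (x * h x) + 1/(\<rho>+1) * (y * h y) + \<epsilon> * (M * c M)" .
    qed
  qed
qed



lemma social_nonneg:
  assumes "feasible P M y" "\<forall>e\<in>E. \<forall>x\<ge>0. 0 \<le> ce e x"
  shows "0 \<le> social_cost E P ce y"
  unfolding social_cost_def using assms load_nonneg[OF assms(1)] by (intro sum_nonneg) auto

lemma social_ge_edge:
  assumes "finite E" "feasible P M y" "\<forall>e\<in>E. \<forall>x\<ge>0. 0 \<le> ce e x" "e \<in> E"
  shows "load P y e * ce e (load P y e) \<le> social_cost E P ce y"
  unfolding social_cost_def using assms load_nonneg[OF assms(2)]
  by (intro member_le_sum) auto

locale rg =
  fixes E :: "'e set" and P :: "'e list set" and ce :: "'e \<Rightarrow> real \<Rightarrow> real"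
    and c :: "real \<Rightarrow> real" and alpha :: "'e \<Rightarrow> ereal"
  assumes finE: "finite E" and finP: "finite P" and Pne: "P \<noteq> {}" and sub: "\<forall>p\<in>P. set p \<subseteq> E"
    and ce: "\<forall>e\<in>E. continuous_on {0..} (ce e) \<and> mono_on {0..} (ce e) \<and> (\<forall>x\<ge>0. 0 \<le> ce e x)"
    and cpos: "\<forall>x>0. 0 < c x" and rv: "regularly_varying_at_top c"
    and alim: "\<forall>e\<in>E. ((\<lambda>x. ereal (ce e x / c x)) \<longlongrightarrow> alpha e) at_top"
    and Apos: "0 < Min ((\<lambda>p. Sup (alpha ` set p)) ` P)"
    and Afin: "Min ((\<lambda>p. Sup (alpha ` set p)) ` P) < \<infinity>"
begin

lemma cenn: "\<forall>e\<in>E. \<forall>x\<ge>0. 0 \<le> ce e x" using ce by auto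

lemma cemono: "e \<in> E \<Longrightarrow> 0 \<le> x \<Longrightarrow> x \<le> y \<Longrightarrow> ce e x \<le> ce e y"
  using ce by (auto intro: mono_onD)

lemma anon: assumes e: "e \<in> E" shows "0 \<le> alpha e"
proof (rule tendsto_lowerbound[OF alim[rule_format, OF e]])
  show "\<forall>\<^sub>F x in at_top. 0 \<le> ereal (ce e x / c x)"
    using eventually_gt_at_top[of 0]
  proof eventually_elim
    case (elim x)
    then have "0 \<le> ce e x" "0 < c x" using cenn cpos e by auto
    then show ?case by simp
  qed
qed simp

definition ra :: "'e \<Rightarrow> real" where "ra e = real_of_ereal (alpha e)"

lemma alpha_fin: assumes "e \<in> E" "alpha e \<noteq> \<infinity>" shows "alpha e = ereal (ra e)" "0 \<le> ra e"
  using anon[OF assms(1)] assms(2) unfolding ra_def by (cases "alpha e"; auto)+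

lemma ratio_fin: assumes "e \<in> E" "alpha e \<noteq> \<infinity>" shows "((\<lambda>x. ce e x / c x) \<longlongrightarrow> ra e) at_top"
  using alim assms alpha_fin[OF assms] by (metis lim_ereal)

lemma tight: "\<exists>ps Ar. ps \<in> P \<and> 0 < Ar \<and> Sup (alpha ` set ps) = ereal Ar \<and> (\<forall>p\<in>P. ereal Ar \<le> Sup (alpha ` set p))"
proof -
  define Am where "Am = Min ((\<lambda>p. Sup (alpha ` set p)) ` P)"
  have "Am \<in> (\<lambda>p. Sup (alpha ` set p)) ` P" unfolding Am_def using finP Pne by (intro Min_in) auto
  then obtain ps where ps: "ps \<in> P" "Sup (alpha ` set ps) = Am" by auto
  have le: "Am \<le> Sup (alpha ` set p)" if "p \<in> P" for p unfolding Am_def using finP that by auto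
  obtain Ar where Ar: "Am = ereal Ar" "0 < Ar" using Apos Afin unfolding Am_def[symmetric] by (cases Am) auto
  show ?thesis using ps le Ar by auto
qed

lemma rho_exists: "\<exists>\<rho>\<ge>0. \<forall>s>0. Lf c s = s powr \<rho>"
proof -
  obtain ps Ar where T: "ps \<in> P" "0 < Ar" "Sup (alpha ` set ps) = ereal Ar" using tight by blast
  then have "(0::ereal) < Sup (alpha ` set ps)" by simp
  then obtain e0 where e0: "e0 \<in> set ps" "0 < alpha e0" by (auto simp: less_Sup_iff)
  have e0E: "e0 \<in> E" using e0 T sub by auto
  have "alpha e0 \<le> Sup (alpha ` set ps)" using e0 by (auto intro: Sup_upper)
  then have fin: "alpha e0 \<noteq> \<infinity>" using T by auto
  have a0: "0 < ra e0" using alpha_fin[OF e0E fin] e0 by simp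
  show ?thesis
    by (rule Lf_powr[OF cpos rv ratio_fin[OF e0E fin] a0]) (use ce e0E in auto)
qed

lemma e0_exists: "\<exists>e0\<in>E. alpha e0 \<noteq> \<infinity> \<and> 0 < ra e0"
proof -
  obtain ps Ar where T: "ps \<in> P" "0 < Ar" "Sup (alpha ` set ps) = ereal Ar" using tight by blast
  then have "(0::ereal) < Sup (alpha ` set ps)" by simp
  then obtain e0 where e0: "e0 \<in> set ps" "0 < alpha e0" by (auto simp: less_Sup_iff)
  have e0E: "e0 \<in> E" using e0 T sub by auto
  have "alpha e0 \<le> Sup (alpha ` set ps)" using e0 by (auto intro: Sup_upper)
  then have fin: "alpha e0 \<noteq> \<infinity>" using T by auto
  have a0: "0 < ra e0" using alpha_fin[OF e0E fin] e0 by simp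
  show ?thesis using e0E fin a0 by blast
qed

lemma c_lower: "\<exists>b>0. \<forall>\<^sub>F M in at_top. b \<le> c M"
proof -
  obtain e0 where e0: "e0 \<in> E" "alpha e0 \<noteq> \<infinity>" "0 < ra e0" using e0_exists by blast
  have r: "((\<lambda>x. ce e0 x / c x) \<longlongrightarrow> ra e0) at_top" by (rule ratio_fin[OF e0(1,2)])
  have "\<forall>\<^sub>F x in at_top. ra e0 / 2 < ce e0 x / c x" by (rule order_tendstoD(1)[OF r]) (use e0 in simp)
  then obtain N where N: "\<And>x. x \<ge> N \<Longrightarrow> ra e0 / 2 < ce e0 x / c x" by (auto simp: eventually_at_top_linorder)
  define x1 where "x1 = max N 1"
  have x1: "x1 \<ge> N" "x1 \<ge> 1" by (auto simp: x1_def)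
  have "0 < c x1" using cpos x1 by auto
  moreover have "ra e0 / 2 < ce e0 x1 / c x1" using N x1 by auto
  ultimately have ce1: "0 < ce e0 x1" using e0 by (smt (verit) divide_nonpos_pos half_gt_zero)
  define b where "b = ce e0 x1 / (2 * ra e0)"
  have b: "0 < b" using ce1 e0 by (simp add: b_def)
  have "\<forall>\<^sub>F x in at_top. ce e0 x / c x < 2 * ra e0" by (rule order_tendstoD(2)[OF r]) (use e0 in simp)
  then have "\<forall>\<^sub>F M in at_top. b \<le> c M" using eventually_ge_at_top[of x1]
  proof eventually_elim
    case (elim M)
    have cM: "0 < c M" using cpos elim x1 by auto
    have "ce e0 x1 \<le> ce e0 M" using elim x1 e0 by (intro cemono) auto
    moreover have "ce e0 M < 2 * ra e0 * c M" using elim cM by (simp add: pos_divide_less_eq)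
    ultimately have "ce e0 x1 < 2 * ra e0 * c M" by linarith
    then show ?case unfolding b_def using e0 by (simp add: pos_divide_le_eq mult.commute less_imp_le)
  qed
  then show ?thesis using b by blast
qed

lemma Kbound: "\<exists>ps K. ps \<in> P \<and> 0 \<le> K \<and> (\<forall>\<^sub>F M in at_top. (\<Sum>e\<in>set ps. ce e M) \<le> K * c M)"
proof -
  obtain ps Ar where T: "ps \<in> P" "0 < Ar" "Sup (alpha ` set ps) = ereal Ar" using tight by blast
  have fin: "e \<in> E" "alpha e \<noteq> \<infinity>" if "e \<in> set ps" for e
  proof -
    show "e \<in> E" using that T sub by auto
    have "alpha e \<le> Sup (alpha ` set ps)" using that by (auto intro: Sup_upper)
    then show "alpha e \<noteq> \<infinity>" using T by auto
  qed
  define K where "K = (\<Sum>e\<in>set ps. ra e + 1)"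
  have K: "0 \<le> K" unfolding K_def using alpha_fin fin by (intro sum_nonneg) fastforce
  have "\<forall>\<^sub>F M in at_top. \<forall>e\<in>set ps. ce e M \<le> (ra e + 1) * c M"
  proof (rule eventually_ball_finite[OF finite_set], rule ballI)
    fix e assume e: "e \<in> set ps"
    have "\<forall>\<^sub>F x in at_top. ce e x / c x < ra e + 1" by (rule order_tendstoD(2)[OF ratio_fin[OF fin[OF e]]]) simp
    then show "\<forall>\<^sub>F M in at_top. ce e M \<le> (ra e + 1) * c M" using eventually_gt_at_top[of 0]
    proof eventually_elim
      case (elim M)
      then have "0 < c M" using cpos by auto
      then show ?case using elim by (simp add: pos_divide_less_eq less_imp_le)
    qed
  qed
  then have "\<forall>\<^sub>F M in at_top. (\<Sum>e\<in>set ps. ce e M) \<le> K * c M"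
  proof eventually_elim
    case (elim M)
    then have "(\<Sum>e\<in>set ps. ce e M) \<le> (\<Sum>e\<in>set ps. (ra e + 1) * c M)" by (intro sum_mono) auto
    then show ?case unfolding K_def by (simp add: sum_distrib_right)
  qed
  then show ?thesis using T K by blast
qed

lemma WE_social_le:
  assumes W: "wardrop P ce M f" and ps: "ps \<in> P" and M: "0 \<le> M"
  shows "social_cost E P ce f \<le> M * (\<Sum>e\<in>set ps. ce e M)"
proof -
  define g where "g = (\<lambda>q. if q = ps then M else 0)"
  have G: "feasible P M g" unfolding feasible_def g_def using M ps finP by auto
  have F: "feasible P M f" using W unfolding wardrop_def by auto
  have lg: "load P g e = (if e \<in> set ps then M else 0)" for e
    unfolding load_def g_def using finP ps by simp
  have "social_cost E P ce f \<le> (\<Sum>e\<in>E. ce e (load P f e) * load P g e)"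
    by (rule wardrop_VI[OF finE finP Pne sub W G])
  also have "\<dots> \<le> (\<Sum>e\<in>E. ce e M * load P g e)"
  proof (rule sum_mono)
    fix e assume e: "e \<in> E"
    have "ce e (load P f e) \<le> ce e M"
      using load_nonneg[OF F] load_le[OF finP F] e by (intro cemono) auto
    then show "ce e (load P f e) * load P g e \<le> ce e M * load P g e"
      using load_nonneg[OF G, of e] by (simp add: mult_right_mono)
  qed
  also have "\<dots> = (\<Sum>e\<in>E. if e \<in> set ps then ce e M * M else 0)" unfolding lg by (rule sum.cong) auto
  also have "\<dots> = (\<Sum>e\<in>E \<inter> set ps. ce e M * M)" using finE by (simp add: sum.inter_restrict)
  also have "E \<inter> set ps = set ps" using sub ps by auto
  finally show ?thesis by (simp add: sum_distrib_left mult.commute)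
qed

lemma WE_edge_le:
  assumes W: "wardrop P ce M f" and ps: "ps \<in> P" and e: "e \<in> E" and pos: "0 < load P f e"
  shows "ce e (load P f e) \<le> (\<Sum>e\<in>set ps. ce e M)"
proof -
  have F: "feasible P M f" using W unfolding wardrop_def by auto
  have "\<exists>p\<in>{p\<in>P. e \<in> set p}. f p > 0"
  proof (rule ccontr)
    assume "\<not> ?thesis"
    then have "\<forall>p\<in>{p\<in>P. e \<in> set p}. f p \<le> 0" by (simp add: not_less)
    then have "load P f e \<le> 0" unfolding load_def by (blast intro: sum_nonpos)
    with pos show False by simp
  qed
  then obtain p where p: "p \<in> P" "e \<in> set p" "f p > 0" by auto
  have "ce e (load P f e) \<le> path_cost P ce f p"
    unfolding path_cost_def
  proof (rule member_le_sum[OF p(2)])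
    fix e' assume "e' \<in> set p - {e}"
    then have "e' \<in> E" using sub p by auto
    then show "0 \<le> ce e' (load P f e')" using cenn load_nonneg[OF F] by auto
  qed simp
  also have "\<dots> \<le> path_cost P ce f ps" using W p ps unfolding wardrop_def by auto
  also have "\<dots> \<le> (\<Sum>e\<in>set ps. ce e M)"
    unfolding path_cost_def
  proof (rule sum_mono)
    fix e' assume "e' \<in> set ps"
    then have "e' \<in> E" using sub ps by auto
    then show "ce e' (load P f e') \<le> ce e' M"
      using load_nonneg[OF F] load_le[OF finP F] by (intro cemono) auto
  qed
  finally show ?thesis .
qed

lemma opt_lower: "\<exists>\<kappa>>0. \<forall>\<^sub>F M in at_top. \<forall>y. feasible P M y \<longrightarrow> \<kappa> * (M * c M) \<le> social_cost E P ce y"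
proof -
  obtain ps Ar where T: "ps \<in> P" "0 < Ar" "Sup (alpha ` set ps) = ereal Ar" "\<forall>p\<in>P. ereal Ar \<le> Sup (alpha ` set p)"
    using tight by blast
  define sP where "sP = 1 / real (card P)"
  have cP: "0 < card P" using finP Pne by (simp add: card_gt_0_iff)
  have sP: "0 < sP" using cP by (simp add: sP_def)
  define L where "L = Lf c sP"
  have L: "0 < L" using Lf_nonneg[OF cpos rv sP] by (simp add: L_def)
  define \<kappa> where "\<kappa> = sP * (Ar/2) * (L/2)"
  have \<kappa>: "0 < \<kappa>" using sP T L by (simp add: \<kappa>_def)
  have ev6: "\<forall>\<^sub>F M in at_top. \<forall>e\<in>E. ereal (Ar/2) < alpha e \<longrightarrow> (Ar/2) * c (M * sP) \<le> ce e (M * sP)"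
  proof (rule eventually_ball_finite[OF finE], rule ballI)
    fix e assume e: "e \<in> E"
    show "\<forall>\<^sub>F M in at_top. ereal (Ar/2) < alpha e \<longrightarrow> (Ar/2) * c (M * sP) \<le> ce e (M * sP)"
    proof (cases "ereal (Ar/2) < alpha e")
      case True
      have "\<forall>\<^sub>F x in at_top. ereal (Ar/2) < ereal (ce e x / c x)"
        by (rule order_tendstoD(1)[OF alim[rule_format, OF e] True])
      then have "\<forall>\<^sub>F x in at_top. (Ar/2) * c x \<le> ce e x" using eventually_gt_at_top[of 0]
      proof eventually_elim
        case (elim x)
        then have "0 < c x" using cpos by auto
        then show ?case using elim by (simp add: pos_less_divide_eq less_imp_le)
      qed
      from eventually_compose_filterlim[OF this lin_at_top[OF sP]]
      show ?thesis by (auto elim: eventually_mono)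
    next
      case False then show ?thesis by simp
    qed
  qed
  have ev7: "\<forall>\<^sub>F M in at_top. (L/2) * c M \<le> c (M * sP)"
  proof -
    have "\<forall>\<^sub>F t in at_top. L/2 < c (t * sP) / c t"
      by (rule order_tendstoD(1)[OF Lf_tendsto(1)[OF rv sP, folded L_def]]) (use L in simp)
    then show ?thesis using eventually_gt_at_top[of 0]
    proof eventually_elim
      case (elim t)
      then have "0 < c t" using cpos by auto
      then show ?case using elim by (simp add: pos_less_divide_eq less_imp_le)
    qed
  qed
  have "\<forall>\<^sub>F M in at_top. \<forall>y. feasible P M y \<longrightarrow> \<kappa> * (M * c M) \<le> social_cost E P ce y"
    using ev6 ev7 eventually_gt_at_top[of 0]
  proof eventually_elim
    case (elim M)
    show ?case
    proof (intro allI impI)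
      fix y assume Y: "feasible P M y"
      have "\<exists>p\<in>P. M * sP \<le> y p"
      proof (rule ccontr)
        assume "\<not> ?thesis"
        then have "\<forall>p\<in>P. y p < M * sP" by auto
        then have "sum y P < (\<Sum>p\<in>P. M * sP)" using finP Pne by (intro sum_strict_mono) auto
        also have "\<dots> = M" using cP by (simp add: sP_def)
        finally show False using Y unfolding feasible_def by simp
      qed
      then obtain p where p: "p \<in> P" "M * sP \<le> y p" by auto
      have "ereal (Ar/2) < ereal Ar" using T by simp
      also have "\<dots> \<le> Sup (alpha ` set p)" using T(4) p by auto
      finally obtain e where e: "e \<in> set p" "ereal (Ar/2) < alpha e" by (auto simp: less_Sup_iff)
      have eE: "e \<in> E" using e p sub by auto
      have ly: "M * sP \<le> load P y e" using load_ge[OF finP Y p(1) e(1)] p by linarith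
      have Msp: "0 \<le> M * sP" using elim sP by simp
      have A2: "0 \<le> Ar/2" using T by simp
      have "\<kappa> * (M * c M) = ((M * sP) * (Ar/2)) * ((L/2) * c M)" by (simp add: \<kappa>_def algebra_simps)
      also have "\<dots> \<le> ((M * sP) * (Ar/2)) * c (M * sP)"
        using elim(2) Msp A2 by (intro mult_left_mono) auto
      also have "\<dots> = (M * sP) * ((Ar/2) * c (M * sP))" by (simp add: algebra_simps)
      also have "\<dots> \<le> (M * sP) * ce e (M * sP)"
        using elim(1) eE e Msp by (intro mult_left_mono) auto
      also have "\<dots> \<le> load P y e * ce e (load P y e)"
        using ly Msp cenn eE by (intro mult_mono cemono) auto
      also have "\<dots> \<le> social_cost E P ce y" by (rule social_ge_edge[OF finE Y cenn eE])
      finally show "\<kappa> * (M * c M) \<le> social_cost E P ce y" .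
    qed
  qed
  then show ?thesis using \<kappa> by blast
qed

lemma main_ineq:
  assumes \<eta>: "0 < \<eta>"
  shows "\<forall>\<^sub>F M in at_top. \<forall>f y. wardrop P ce M f \<longrightarrow> feasible P M y \<longrightarrow>
           social_cost E P ce f \<le> social_cost E P ce y + \<eta> * (M * c M)"
proof -
  obtain \<rho> where \<rho>: "0 \<le> \<rho>" "\<forall>s>0. Lf c s = s powr \<rho>" using rho_exists by blast
  obtain ps K where PK: "ps \<in> P" "0 \<le> K" "\<forall>\<^sub>F M in at_top. (\<Sum>e\<in>set ps. ce e M) \<le> K * c M"
    using Kbound by blast
  obtain b where b: "0 < b" "\<forall>\<^sub>F M in at_top. b \<le> c M" using c_lower by blast
  define \<epsilon>1 where "\<epsilon>1 = \<eta> / ((\<rho>+1) * (real (card E) + 1))"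
  have \<epsilon>1: "0 < \<epsilon>1" using \<eta> \<rho> by (simp add: \<epsilon>1_def)
  define Z where "Z = (\<Sum>e\<in>E. ce e 0)"
  have Z: "0 \<le> Z" unfolding Z_def using cenn by (intro sum_nonneg) auto
  define D where "D = Z/b + K + 1"
  have "0 \<le> Z/b" using Z b by simp
  then have D: "0 < D" using PK unfolding D_def by linarith
  define \<delta> where "\<delta> = \<epsilon>1 / D"
  have \<delta>: "0 < \<delta>" using \<epsilon>1 D by (simp add: \<delta>_def)
  define L where "L = Lf c \<delta>"
  have L: "0 < L" using Lf_nonneg[OF cpos rv \<delta>] by (simp add: L_def)
  define K' where "K' = 2 * (K + 1) / (\<delta> * L)"
  have K': "0 < K'" using PK \<delta> L by (simp add: K'_def)
  have Efin: "\<forall>\<^sub>F M in at_top. \<forall>e\<in>E. alpha e \<noteq> \<infinity> \<longrightarrow> (\<forall>x\<in>{0..M}. \<forall>y\<in>{0..M}.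
      ce e x * y \<le> \<rho>/(\<rho>+1) * (x * ce e x) + 1/(\<rho>+1) * (y * ce e y) + \<epsilon>1 * (M * c M))"
  proof (rule eventually_ball_finite[OF finE], rule ballI)
    fix e assume e: "e \<in> E"
    show "\<forall>\<^sub>F M in at_top. alpha e \<noteq> \<infinity> \<longrightarrow> (\<forall>x\<in>{0..M}. \<forall>y\<in>{0..M}.
      ce e x * y \<le> \<rho>/(\<rho>+1) * (x * ce e x) + 1/(\<rho>+1) * (y * ce e y) + \<epsilon>1 * (M * c M))"
    proof (cases "alpha e = \<infinity>")
      case False
      have pw: "\<forall>s>0. ((\<lambda>M. ce e (M * s) / c M) \<longlongrightarrow> ra e * s powr \<rho>) at_top"
        using ratio_tendsto[OF cpos rv ratio_fin[OF e False]] \<rho>(2) by auto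
      have "\<forall>\<^sub>F M in at_top. \<forall>x\<in>{0..M}. \<forall>y\<in>{0..M}.
          ce e x * y \<le> \<rho>/(\<rho>+1) * (x * ce e x) + 1/(\<rho>+1) * (y * ce e y) + \<epsilon>1 * (M * c M)"
        by (rule key_fin[OF _ _ cpos pw alpha_fin(2)[OF e False] \<rho>(1) \<epsilon>1]) (use ce e in auto)
      then show ?thesis by (auto elim: eventually_mono)
    qed simp
  qed
  have Einf: "\<forall>\<^sub>F M in at_top. \<forall>e\<in>E. alpha e = \<infinity> \<longrightarrow> K' * c (M * \<delta>) \<le> ce e (M * \<delta>)"
  proof (rule eventually_ball_finite[OF finE], rule ballI)
    fix e assume e: "e \<in> E"
    show "\<forall>\<^sub>F M in at_top. alpha e = \<infinity> \<longrightarrow> K' * c (M * \<delta>) \<le> ce e (M * \<delta>)"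
    proof (cases "alpha e = \<infinity>")
      case True
      have "\<forall>\<^sub>F x in at_top. ereal K' < ereal (ce e x / c x)"
        by (rule order_tendstoD(1)[OF alim[rule_format, OF e]]) (use True in simp)
      then have "\<forall>\<^sub>F x in at_top. K' * c x \<le> ce e x" using eventually_gt_at_top[of 0]
      proof eventually_elim
        case (elim x)
        then have "0 < c x" using cpos by auto
        then show ?case using elim by (simp add: pos_less_divide_eq less_imp_le)
      qed
      from eventually_compose_filterlim[OF this lin_at_top[OF \<delta>]]
      show ?thesis by (auto elim: eventually_mono)
    qed simp
  qed
  have Ecd: "\<forall>\<^sub>F M in at_top. (L/2) * c M \<le> c (M * \<delta>)"
  proof -
    have "\<forall>\<^sub>F t in at_top. L/2 < c (t * \<delta>) / c t"
      by (rule order_tendstoD(1)[OF Lf_tendsto(1)[OF rv \<delta>, folded L_def]]) (use L in simp)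
    then show ?thesis using eventually_gt_at_top[of 0]
    proof eventually_elim
      case (elim t)
      then have "0 < c t" using cpos by auto
      then show ?case using elim by (simp add: pos_less_divide_eq less_imp_le)
    qed
  qed
  show ?thesis using Efin Einf Ecd PK(3) b(2) eventually_gt_at_top[of 0]
  proof eventually_elim
    case (elim M)
    have M: "0 < M" using elim by simp
    have cM: "0 < c M" using cpos M by auto
    have MC: "0 \<le> M * c M" using M cM by simp
    show ?case
    proof (intro allI impI)
      fix f y assume W: "wardrop P ce M f" and Y: "feasible P M y"
      have F: "feasible P M f" using W unfolding wardrop_def by auto
      define x where "x = load P f"
      have x: "0 \<le> x e" "x e \<le> M" for e unfolding x_def using load_nonneg[OF F] load_le[OF finP F] by auto
      have ly: "0 \<le> load P y e" "load P y e \<le> M" for e using load_nonneg[OF Y] load_le[OF finP Y] by auto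
      have SF: "social_cost E P ce f \<le> M * (K * c M)"
      proof -
        have "social_cost E P ce f \<le> M * (\<Sum>e\<in>set ps. ce e M)" by (rule WE_social_le[OF W PK(1)]) (use M in simp)
        also have "\<dots> \<le> M * (K * c M)" using elim(4) M by (intro mult_left_mono) auto
        finally show ?thesis .
      qed
      show "social_cost E P ce f \<le> social_cost E P ce y + \<eta> * (M * c M)"
      proof (cases "\<exists>e\<in>E. alpha e = \<infinity> \<and> M * \<delta> < load P y e")
        case True
        then obtain e where e: "e \<in> E" "alpha e = \<infinity>" "M * \<delta> < load P y e" by blast
        have Md: "0 \<le> M * \<delta>" using M \<delta> by simp
        have "M * (K * c M) \<le> M * ((K + 1) * c M)" using M cM by (intro mult_left_mono) auto
        also have "\<dots> = (M * \<delta>) * K' * ((L/2) * c M)" using \<delta> L by (simp add: K'_def field_simps)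
        also have "\<dots> \<le> (M * \<delta>) * K' * c (M * \<delta>)" using elim(3) Md K' by (intro mult_left_mono) auto
        also have "\<dots> = (M * \<delta>) * (K' * c (M * \<delta>))" by simp
        also have "\<dots> \<le> (M * \<delta>) * ce e (M * \<delta>)" using elim(2) e Md by (intro mult_left_mono) auto
        also have "\<dots> \<le> load P y e * ce e (load P y e)"
          using e Md cenn by (intro mult_mono cemono) auto
        also have "\<dots> \<le> social_cost E P ce y" by (rule social_ge_edge[OF finE Y cenn e(1)])
        finally have "social_cost E P ce f \<le> social_cost E P ce y" using SF by linarith
        moreover have "0 \<le> \<eta> * (M * c M)" using \<eta> MC by simp
        ultimately show ?thesis by linarith
      next
        case False
        have edge: "ce e (x e) * load P y e \<le> \<rho>/(\<rho>+1) * (x e * ce e (x e)) + 1/(\<rho>+1) * (load P y e * ce e (load P y e)) + \<epsilon>1 * (M * c M)"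
          if e: "e \<in> E" for e
        proof (cases "alpha e = \<infinity>")
          case fin: False
          show ?thesis using elim(1) e fin x ly by auto
        next
          case inf: True
          have yl: "load P y e \<le> M * \<delta>" using False e inf by auto
          have ce0: "ce e (x e) \<le> Z + K * c M"
          proof (cases "0 < x e")
            case True
            have "ce e (x e) \<le> (\<Sum>e\<in>set ps. ce e M)" unfolding x_def
              by (rule WE_edge_le[OF W PK(1) e]) (use True in \<open>simp add: x_def\<close>)
            also have "\<dots> \<le> K * c M" using elim(4) .
            finally show ?thesis using Z by linarith
          next
            case False
            then have "x e = 0" using x(1)[of e] by simp
            moreover have "ce e 0 \<le> Z" unfolding Z_def using e cenn finE by (intro member_le_sum) auto
            moreover have "0 \<le> K * c M" using PK cM by simp
            ultimately show ?thesis by simp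
          qed
          have "Z = (Z/b) * b" using b by simp
          also have "\<dots> \<le> (Z/b) * c M" using Z b elim(5) by (intro mult_left_mono) auto
          finally have "Z + K * c M \<le> D * c M" unfolding D_def using cM by (simp add: algebra_simps)
          then have ce1: "ce e (x e) \<le> D * c M" using ce0 by linarith
          have "ce e (x e) * load P y e \<le> (D * c M) * (M * \<delta>)"
            using ce1 yl ly cenn e x D cM by (intro mult_mono) auto
          also have "\<dots> = \<epsilon>1 * (M * c M)" using D unfolding \<delta>_def by (simp add: field_simps)
          finally have T: "ce e (x e) * load P y e \<le> \<epsilon>1 * (M * c M)" .
          have "0 \<le> \<rho>/(\<rho>+1) * (x e * ce e (x e))" using \<rho> x cenn e by auto
          moreover have "0 \<le> 1/(\<rho>+1) * (load P y e * ce e (load P y e))" using \<rho> ly cenn e by auto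
          ultimately show ?thesis using T by linarith
        qed
        have "social_cost E P ce f \<le> (\<Sum>e\<in>E. ce e (x e) * load P y e)"
          unfolding x_def by (rule wardrop_VI[OF finE finP Pne sub W Y])
        also have "\<dots> \<le> (\<Sum>e\<in>E. \<rho>/(\<rho>+1) * (x e * ce e (x e)) + 1/(\<rho>+1) * (load P y e * ce e (load P y e)) + \<epsilon>1 * (M * c M))"
          by (rule sum_mono) (rule edge)
        also have "\<dots> = \<rho>/(\<rho>+1) * social_cost E P ce f + 1/(\<rho>+1) * social_cost E P ce y + real (card E) * (\<epsilon>1 * (M * c M))"
          unfolding social_cost_def x_def by (simp add: sum.distrib sum_distrib_left)
        finally have S: "social_cost E P ce f \<le> \<rho>/(\<rho>+1) * social_cost E P ce f + 1/(\<rho>+1) * social_cost E P ce y + real (card E) * (\<epsilon>1 * (M * c M))" .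
        have r1: "0 < \<rho> + 1" using \<rho> by simp
        have k: "\<rho>/(\<rho>+1) + 1/(\<rho>+1) = 1" using r1 by (simp add: add_divide_distrib[symmetric])
        have "social_cost E P ce f = (\<rho>/(\<rho>+1) + 1/(\<rho>+1)) * social_cost E P ce f" unfolding k by simp
        then have "social_cost E P ce f = \<rho>/(\<rho>+1) * social_cost E P ce f + 1/(\<rho>+1) * social_cost E P ce f"
          by (simp only: distrib_right)
        with S have "1/(\<rho>+1) * social_cost E P ce f \<le> 1/(\<rho>+1) * social_cost E P ce y + real (card E) * (\<epsilon>1 * (M * c M))"
          by linarith
        then have "(\<rho>+1) * (1/(\<rho>+1) * social_cost E P ce f) \<le> (\<rho>+1) * (1/(\<rho>+1) * social_cost E P ce y + real (card E) * (\<epsilon>1 * (M * c M)))"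
          using r1 by (intro mult_left_mono) auto
        moreover have idt: "(\<rho>+1) * (1/(\<rho>+1) * T) = T" for T using r1 by simp
        ultimately have "social_cost E P ce f \<le> social_cost E P ce y + (\<rho>+1) * (real (card E) * (\<epsilon>1 * (M * c M)))"
          by (simp only: distrib_left idt)
        then have S2: "social_cost E P ce f \<le> social_cost E P ce y + ((\<rho>+1) * real (card E) * \<epsilon>1) * (M * c M)"
          by (simp only: mult.assoc)
        have "(\<rho>+1) * real (card E) * \<epsilon>1 = \<eta> * (real (card E) / (real (card E) + 1))"
        proof -
          have p: "0 < real (card E) + 1" by simp
          have "(\<rho>+1) * real (card E) * \<epsilon>1 = \<eta> * real (card E) * ((\<rho>+1) / ((\<rho>+1) * (real (card E) + 1)))"
            unfolding \<epsilon>1_def by (simp add: algebra_simps)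
          also have "(\<rho>+1) / ((\<rho>+1) * (real (card E) + 1)) = 1 / (real (card E) + 1)" using r1 p by simp
          finally show ?thesis by simp
        qed
        also have "\<dots> \<le> \<eta> * 1" using \<eta> by (intro mult_left_mono) auto
        finally have "((\<rho>+1) * real (card E) * \<epsilon>1) * (M * c M) \<le> \<eta> * (M * c M)"
          using MC by (intro mult_right_mono) auto
        with S2 show ?thesis by linarith
      qed
    qed
  qed
qed

lemma PoA_bounds:
  assumes \<epsilon>0: "0 < \<epsilon>0"
  shows "\<forall>\<^sub>F M in at_top. 1 \<le> PoA E P ce M \<and> PoA E P ce M \<le> 1 + \<epsilon>0"
proof -
  obtain \<kappa> where \<kappa>: "0 < \<kappa>" "\<forall>\<^sub>F M in at_top. \<forall>y. feasible P M y \<longrightarrow> \<kappa> * (M * c M) \<le> social_cost E P ce y"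
    using opt_lower by blast
  have "0 < \<kappa> * \<epsilon>0" using \<kappa> \<epsilon>0 by simp
  note mi = main_ineq[OF this]
  show ?thesis using \<kappa>(2) mi eventually_gt_at_top[of 0]
  proof eventually_elim
    case (elim M)
    have M: "0 < M" using elim by simp
    have cM: "0 < c M" using cpos M by auto
    have ex: "\<exists>f. wardrop P ce M f" by (rule wardrop_exists[OF finE finP Pne sub ce]) (use M in simp)
    define fw where "fw = (SOME f. wardrop P ce M f)"
    have W: "wardrop P ce M fw" using someI_ex[OF ex] unfolding fw_def .
    have F: "feasible P M fw" using W unfolding wardrop_def by auto
    define S where "S = social_cost E P ce ` {f. feasible P M f}"
    have Sne: "S \<noteq> {}" using F unfolding S_def by auto
    have bdd: "bdd_below S" unfolding S_def using social_nonneg[OF _ cenn] by (auto intro: bdd_belowI[of _ 0])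
    have Eq: "Eq E P ce M = social_cost E P ce fw" unfolding Eq_def fw_def ..
    have Opt: "Opt E P ce M = Inf S" unfolding Opt_def S_def ..
    have o1: "Inf S \<le> social_cost E P ce fw" by (rule cInf_lower) (use F bdd S_def in auto)
    have o2: "\<kappa> * (M * c M) \<le> Inf S" by (rule cInf_greatest[OF Sne]) (use elim(1) S_def in auto)
    have o3: "social_cost E P ce fw - \<kappa> * \<epsilon>0 * (M * c M) \<le> Inf S"
    proof (rule cInf_greatest[OF Sne])
      fix z assume "z \<in> S"
      then obtain y where y: "feasible P M y" "z = social_cost E P ce y" unfolding S_def by auto
      then show "social_cost E P ce fw - \<kappa> * \<epsilon>0 * (M * c M) \<le> z" using elim(2) W by force
    qed
    have pos: "0 < \<kappa> * (M * c M)" using \<kappa> M cM by simp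
    then have I0: "0 < Inf S" using o2 by linarith
    have P: "PoA E P ce M = social_cost E P ce fw / Inf S" unfolding PoA_def Eq Opt using I0 by simp
    have "1 \<le> social_cost E P ce fw / Inf S" using o1 I0 by (simp add: le_divide_eq_1_pos)
    moreover have "social_cost E P ce fw / Inf S \<le> 1 + \<epsilon>0"
    proof -
      have "\<kappa> * \<epsilon>0 * (M * c M) = \<epsilon>0 * (\<kappa> * (M * c M))" by simp
      also have "\<dots> \<le> \<epsilon>0 * Inf S" using o2 \<epsilon>0 by (intro mult_left_mono) auto
      finally have "social_cost E P ce fw \<le> (1 + \<epsilon>0) * Inf S" using o3 by (simp add: algebra_simps)
      then show ?thesis using I0 by (simp add: pos_divide_le_eq)
    qed
    ultimately show ?case unfolding P by simp
  qed
qed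

end

theorem theorem4p6:
  fixes E :: "'e set" and src trg :: "'e \<Rightarrow> 'v" and orig dest :: 'v
    and P :: "'e list set" and ce :: "'e \<Rightarrow> real \<Rightarrow> real"
    and c :: "real \<Rightarrow> real" and alpha :: "'e \<Rightarrow> ereal"
  assumes "finite E"
    and "finite P" and "P \<noteq> {}"
    and "\<forall>p\<in>P. simple_path E src trg orig dest p"
    and "\<forall>e\<in>E. continuous_on {0..} (ce e) \<and> mono_on {0..} (ce e) \<and> (\<forall>x\<ge>0. 0 \<le> ce e x)"
    and "\<forall>x>0. 0 < c x"
    and "regularly_varying_at_top c"
    and "\<forall>e\<in>E. ((\<lambda>x. ereal (ce e x / c x)) \<longlongrightarrow> alpha e) at_top"
    and "0 < Min ((\<lambda>p. Sup (alpha ` set p)) ` P)"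
    and "Min ((\<lambda>p. Sup (alpha ` set p)) ` P) < \<infinity>"
  shows "((\<lambda>M. PoA E P ce M) \<longlongrightarrow> 1) at_top"
proof -
  interpret rg E P ce c alpha
    by unfold_locales (use assms in \<open>auto simp: simple_path_def\<close>)
  show ?thesis
  proof (rule order_tendstoI)
    fix a :: real assume a: "a < 1"
    have "\<forall>\<^sub>F M in at_top. 1 \<le> PoA E P ce M \<and> PoA E P ce M \<le> 1 + 1" by (rule PoA_bounds) simp
    then show "\<forall>\<^sub>F M in at_top. a < PoA E P ce M" by eventually_elim (use a in auto)
  next
    fix a :: real assume a: "1 < a"
    have "0 < (a - 1) / 2" using a by simp
    then have "\<forall>\<^sub>F M in at_top. 1 \<le> PoA E P ce M \<and> PoA E P ce M \<le> 1 + (a - 1) / 2" by (rule PoA_bounds)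
    then show "\<forall>\<^sub>F M in at_top. PoA E P ce M < a"
    proof eventually_elim
      case (elim M)
      then have "PoA E P ce M \<le> 1 + (a - 1) / 2" by simp
      moreover have "1 + (a - 1) / 2 < a" using a by (simp add: field_simps)
      ultimately show ?case by linarith
    qed
  qed
qed

end
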